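(* There exist constants $c>0$, $c_1>0$ depending only on $d$ and $a$ (in particular independent of $\eta$, $k$, $m$, $L$, $\bar\mu_0$) such that for all $y,y'\in\Omega_k$ and all $f,f'\in\mathcal L^2(\Omega)$ with $\mathrm{supp} f\subset B_k(y)$ and $\mathrm{supp} f'\subset B_k(y')$, $$|\langle f,G_k(\Omega)f'\rangle|\le c\,e^{-c_1|y-y'|}\,\|f\|_2\|f'\|_2 .$$
   Context: Standing setup. Fix an integer $d\ge1$, an odd integer $L>1$, integers $k\ge1$, $m\ge k$, and set $\eta=L^{-k}$. Let $\Omega=\eta\{0,1,\dots,L^m-1\}^d\subset\eta\mathbb Z^d$ and, for $0\le j\le m$, $\Omega_j=(L^j\eta)\{0,1,\dots,L^{m-j}-1\}^d$ (so $\Omega_k\subset\mathbb Z^d$). $\mathcal L^2(\Omega)$ is the space of complex functions on $\Omega$ with $\langle f,g\rangle=\eta^d\sum_{x\in\Omega}\overline{f(x)}g(x)$, $\|f\|_2^2=\langle f,f\rangle$. For $y\in (L^j\eta)\mathbb Z^d$ let $B_j(y)=\{x\in\eta\mathbb Z^d:\ y_\mu\le x_\mu<y_\mu+L^j\eta,\ \mu=0,\dots,d-1\}$. The averaging operator $Q_{\Omega,j}:\mathcal L^2(\Omega)\to\mathcal L^2(\Omega_j)$ is $(Q_{\Omega,j}f)(y)=L^{-jd}\sum_{x\in B_j(y)}f(x)$ (with $\mathcal L^2(\Omega_j)$ carrying the inner product $(L^j\eta)^d\sum_{y\in\Omega_j}\bar g h$); its adjoint is $(Q_{\Omega,j}^*h)(x)=h(y_x)$,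 $x\in B_j(y_x)$. The Neumann Laplacian is $(\Delta^\eta_\Omega f)(x)=\eta^{-2}\sum_{\mu}\big(f(x+\eta e_\mu)-2f(x)+f(x-\eta e_\mu)\big)$, with $f(x\pm\eta e_\mu)$ replaced by $f(x)$ if $x\pm\eta e_\mu\notin\Omega$. Fix $a\in(0,1]$, $a_j=a\frac{1-L^{-2}}{1-L^{-2j}}$, $\bar\mu_0\ge0$, $\bar\mu_j=L^{2j}\bar\mu_0$, and $G_k(\Omega)=(-\Delta^\eta_\Omega+\bar\mu_k+a_kQ_{\Omega,k}^*Q_{\Omega,k})^{-1}$. *)

theory Defs
  imports "HOL-Analysis.Analysis"
begin

text \<open>The dimension d is CARD('n) for a finite index type 'n.
A point x of eta Z^d is represented by its integer coordinates n :: 'n => int,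
i.e. x = eta * n. Functions on the lattice are maps ('n => int) => complex;
elements of L^2(Omega) are those vanishing outside Omega.\<close>

definition Omega :: "nat \<Rightarrow> nat \<Rightarrow> ('n::finite \<Rightarrow> int) set" where
  "Omega L m = {x. \<forall>\<mu>. 0 \<le> x \<mu> \<and> x \<mu> < int L ^ m}"

text \<open>Omega_j = (L^j eta){0,...,L^(m-j)-1}^d, in eta-units.\<close>
definition Omega_j :: "nat \<Rightarrow> nat \<Rightarrow> nat \<Rightarrow> ('n::finite \<Rightarrow> int) set" where
  "Omega_j L m j = {y \<in> Omega L m. \<forall>\<mu>. int L ^ j dvd y \<mu>}"

definition Block :: "nat \<Rightarrow> nat \<Rightarrow> ('n::finite \<Rightarrow> int) \<Rightarrow> ('n \<Rightarrow> int) set" where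
  "Block L j y = {x. \<forall>\<mu>. y \<mu> \<le> x \<mu> \<and> x \<mu> < y \<mu> + int L ^ j}"

definition L2 :: "('n::finite \<Rightarrow> int) set \<Rightarrow> (('n \<Rightarrow> int) \<Rightarrow> complex) set" where
  "L2 S = {f. \<forall>x. x \<notin> S \<longrightarrow> f x = 0}"

definition inner_L2 :: "real \<Rightarrow> ('n::finite \<Rightarrow> int) set \<Rightarrow> (('n \<Rightarrow> int) \<Rightarrow> complex)
    \<Rightarrow> (('n \<Rightarrow> int) \<Rightarrow> complex) \<Rightarrow> complex" where
  "inner_L2 eta S f g = complex_of_real (eta ^ CARD('n)) * (\<Sum>x\<in>S. cnj (f x) * g x)"

definition norm_L2 :: "real \<Rightarrow> ('n::finite \<Rightarrow> int) set \<Rightarrow> (('n \<Rightarrow> int) \<Rightarrow> complex) \<Rightarrow> real" where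
  "norm_L2 eta S f = sqrt (Re (inner_L2 eta S f f))"

definition neumann_lap :: "real \<Rightarrow> ('n::finite \<Rightarrow> int) set \<Rightarrow> (('n \<Rightarrow> int) \<Rightarrow> complex)
    \<Rightarrow> ('n \<Rightarrow> int) \<Rightarrow> complex" where
  "neumann_lap eta S f x =
     (if x \<in> S then
        complex_of_real (1 / eta ^ 2) *
        (\<Sum>\<mu>\<in>UNIV.
           (let xp = x(\<mu> := x \<mu> + 1); xm = x(\<mu> := x \<mu> - 1) in
             (if xp \<in> S then f xp else f x) - 2 * f x + (if xm \<in> S then f xm else f x)))
      else 0)"

definition Qavg :: "nat \<Rightarrow> nat \<Rightarrow> nat \<Rightarrow> (('n::finite \<Rightarrow> int) \<Rightarrow> complex) \<Rightarrow> ('n \<Rightarrow> int) \<Rightarrow> complex" where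
  "Qavg L m j f y =
     (if y \<in> Omega_j L m j then
        complex_of_real (1 / real L ^ (j * CARD('n))) * (\<Sum>x\<in>Block L j y. f x)
      else 0)"

definition Qadj :: "nat \<Rightarrow> nat \<Rightarrow> nat \<Rightarrow> (('n::finite \<Rightarrow> int) \<Rightarrow> complex) \<Rightarrow> ('n \<Rightarrow> int) \<Rightarrow> complex" where
  "Qadj L m j h x =
     (if x \<in> Omega L m then h (\<lambda>\<mu>. int L ^ j * (x \<mu> div int L ^ j)) else 0)"

definition a_j :: "real \<Rightarrow> nat \<Rightarrow> nat \<Rightarrow> real" where
  "a_j a L j = a * (1 - real L powr (-2)) / (1 - real L powr (- 2 * real j))"

definition mubar_j :: "real \<Rightarrow> nat \<Rightarrow> nat \<Rightarrow> real" where
  "mubar_j mu0 L j = real L ^ (2 * j) * mu0"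

definition eta_of :: "nat \<Rightarrow> nat \<Rightarrow> real" where
  "eta_of L k = real L powr (- real k)"

definition Hop :: "real \<Rightarrow> real \<Rightarrow> nat \<Rightarrow> nat \<Rightarrow> nat \<Rightarrow> (('n::finite \<Rightarrow> int) \<Rightarrow> complex)
    \<Rightarrow> ('n \<Rightarrow> int) \<Rightarrow> complex" where
  "Hop a mu0 L k m f x =
     (if x \<in> Omega L m then
        - neumann_lap (eta_of L k) (Omega L m) f x
        + complex_of_real (mubar_j mu0 L k) * f x
        + complex_of_real (a_j a L k) * Qadj L m k (Qavg L m k f) x
      else 0)"

definition Gk :: "real \<Rightarrow> real \<Rightarrow> nat \<Rightarrow> nat \<Rightarrow> nat \<Rightarrow> (('n::finite \<Rightarrow> int) \<Rightarrow> complex)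
    \<Rightarrow> ('n \<Rightarrow> int) \<Rightarrow> complex" where
  "Gk a mu0 L k m f = (THE g. g \<in> L2 (Omega L m) \<and> Hop a mu0 L k m g = f)"

definition latdist :: "real \<Rightarrow> ('n::finite \<Rightarrow> int) \<Rightarrow> ('n \<Rightarrow> int) \<Rightarrow> real" where
  "latdist eta y y' = sqrt (\<Sum>\<mu>\<in>UNIV. (eta * real_of_int (y \<mu> - y' \<mu>))^2)"

end

theory Submission
  imports Defs "HOL-Library.Function_Algebras"
begin

definition cube :: "('n::finite \<Rightarrow> int) \<Rightarrow> int \<Rightarrow> ('n \<Rightarrow> int) set" where
  "cube c M = {x. \<forall>\<mu>. c \<mu> \<le> x \<mu> \<and> x \<mu> < c \<mu> + M}"

lemma box_PiE: "cube c M = PiE UNIV (\<lambda>\<mu>. {c \<mu>..<c \<mu> + M})"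
  unfolding cube_def PiE_UNIV_domain Pi_def by auto

lemma finite_box[simp]: "finite (cube c M)"
  unfolding box_PiE by (rule finite_PiE) auto

lemma card_cube: "M \<ge> 0 \<Longrightarrow> card (cube (c::'n::finite \<Rightarrow> int) M) = nat M ^ CARD('n::finite)"
  unfolding box_PiE by (simp add: card_PiE)

lemma Block_box: "Block L j y = cube y (int L ^ j)"
  unfolding Block_def cube_def by simp

lemma Omega_box: "Omega L m = cube (\<lambda>_. 0) (int L ^ m)"
  unfolding Omega_def cube_def by simp

definition corner :: "int \<Rightarrow> ('n \<Rightarrow> int) \<Rightarrow> ('n \<Rightarrow> int)" where
  "corner M x = (\<lambda>\<mu>. M * (x \<mu> div M))"

lemma in_box_corner: "M > 0 \<Longrightarrow> x \<in> cube (corner M x) M"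
  unfolding cube_def corner_def
  by (auto simp: mult.commute minus_mod_eq_mult_div[symmetric])

lemma corner_in_Omega_j:
  assumes "L > 0" "k \<le> m" "x \<in> Omega L m"
  shows "corner (int L ^ k) x \<in> Omega_j L m k"
proof -
  have M: "int L ^ k > 0" using assms by simp
  { fix \<mu>
    have "int L ^ k * (x \<mu> div int L ^ k) \<le> x \<mu>"
      using M by (simp add: mult.commute minus_mod_eq_mult_div[symmetric])
    moreover have "0 \<le> int L ^ k * (x \<mu> div int L ^ k)"
      using M assms(3) unfolding Omega_def by (simp add: pos_imp_zdiv_nonneg_iff)
    moreover have "x \<mu> < int L ^ m" using assms(3) unfolding Omega_def by auto
    ultimately have "0 \<le> corner (int L ^ k) x \<mu> \<and> corner (int L ^ k) x \<mu> < int L ^ m"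
      unfolding corner_def by linarith }
  then show ?thesis unfolding Omega_j_def Omega_def corner_def by auto
qed

lemma Block_sub_Omega:
  assumes "L > 0" "k \<le> m" "c \<in> Omega_j L m k"
  shows "Block L k c \<subseteq> Omega L m"
proof
  fix x assume x: "x \<in> Block L k c"
  have M: "int L ^ k > 0" using assms by simp
  { fix \<mu>
    obtain a where a: "c \<mu> = int L ^ k * a" using assms(3) unfolding Omega_j_def by (auto elim!: dvdE)
    have P: "int L ^ m = int L ^ k * int L ^ (m - k)" using assms(2) by (simp add: power_add[symmetric])
    have "c \<mu> < int L ^ m" "0 \<le> c \<mu>" using assms(3) unfolding Omega_j_def Omega_def by auto
    then have "a < int L ^ (m-k)" "0 \<le> a" using a P M
      by (auto simp: zero_le_mult_iff)
    then have "a + 1 \<le> int L ^ (m-k)" by simp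
    then have "int L ^ k * (a + 1) \<le> int L ^ k * int L ^ (m-k)" using M by simp
    then have "c \<mu> + int L ^ k \<le> int L ^ m" using a P by (simp add: algebra_simps)
    moreover have "c \<mu> \<le> x \<mu>" "x \<mu> < c \<mu> + int L ^ k" using x unfolding Block_def by auto
    ultimately have "0 \<le> x \<mu> \<and> x \<mu> < int L ^ m" using \<open>0 \<le> c \<mu>\<close> by linarith }
  then show "x \<in> Omega L m" unfolding Omega_def by auto
qed

lemma corner_of_box:
  assumes "M > 0" "\<forall>\<mu>. M dvd c \<mu>" "x \<in> cube c M"
  shows "corner M x = c"
proof
  fix \<mu>
  obtain a where a: "c \<mu> = M * a" using assms(2) by (meson dvdE)
  have "c \<mu> \<le> x \<mu> \<and> x \<mu> < c \<mu> + M" using assms(3) unfolding cube_def by simp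
  then have "M * a \<le> x \<mu>" "x \<mu> < M * a + M" using a by auto
  then have r: "0 \<le> x \<mu> - M*a" "x \<mu> - M*a < M" by auto
  have e: "(x \<mu> - M*a + a*M) div M = a + (x \<mu> - M*a) div M"
    using assms(1) by (intro div_mult_self1) simp
  have "(x \<mu> - M*a) div M = 0" using r by (simp add: div_pos_pos_trivial)
  with e have "x \<mu> div M = a" by (simp add: mult.commute)
  then show "corner M x \<mu> = c \<mu>" unfolding corner_def using a by simp
qed

lemma tri_line:
  fixes w :: "int \<Rightarrow> complex"
  assumes "s \<le> t"
  shows "cmod (w t - w s) \<le> (\<Sum>r\<in>{s..<t}. cmod (w r - w (r+1)))"
  using assms
proof (induction t rule: int_ge_induct)
  case base then show ?case by simp
next
  case (step t)
  have "cmod (w (t+1) - w s) \<le> cmod (w t - w s) + cmod (w t - w (t+1))"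
  proof -
    have "w (t+1) - w s = (w t - w s) - (w t - w (t+1))" by simp
    then show ?thesis by (metis norm_triangle_ineq4)
  qed
  also have "\<dots> \<le> (\<Sum>r\<in>{s..<t}. cmod (w r - w (r+1))) + cmod (w t - w (t+1))"
    using step.IH by simp
  also have "\<dots> = (\<Sum>r\<in>{s..<t+1}. cmod (w r - w (r+1)))"
  proof -
    have "{s..<t+1} = insert t {s..<t}" using step.hyps by auto
    then show ?thesis by simp
  qed
  finally show ?case .
qed

lemma sum_sq_le_card:
  fixes a :: "'a \<Rightarrow> real"
  assumes "finite R"
  shows "(\<Sum>r\<in>R. a r)^2 \<le> real (card R) * (\<Sum>r\<in>R. (a r)^2)"
proof -
  have "(\<Sum>r\<in>R. a r) \<le> (\<Sum>r\<in>R. \<bar>a r\<bar> * \<bar>1\<bar>)" by (intro sum_mono) auto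
  also have "\<dots> \<le> L2_set a R * L2_set (\<lambda>_. 1::real) R" by (rule L2_set_mult_ineq)
  finally have A: "(\<Sum>r\<in>R. a r) \<le> L2_set a R * L2_set (\<lambda>_. 1::real) R" .
  have "- (\<Sum>r\<in>R. a r) \<le> (\<Sum>r\<in>R. \<bar>a r\<bar> * \<bar>1\<bar>)" by (simp add: sum_negf[symmetric] sum_mono)
  also have "\<dots> \<le> L2_set a R * L2_set (\<lambda>_. 1::real) R" by (rule L2_set_mult_ineq)
  finally have B: "- (\<Sum>r\<in>R. a r) \<le> L2_set a R * L2_set (\<lambda>_. 1::real) R" .
  have "(\<Sum>r\<in>R. a r)^2 = \<bar>\<Sum>r\<in>R. a r\<bar>^2" by simp
  also have "\<dots> \<le> (L2_set a R * L2_set (\<lambda>_. 1::real) R)^2"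
    using A B by (intro power_mono) auto
  also have "\<dots> = (\<Sum>r\<in>R. (a r)^2) * real (card R)"
    by (simp add: power_mult_distrib L2_set_def sum_nonneg)
  finally show ?thesis by (simp add: mult.commute)
qed

lemma line_pair_bound:
  fixes w :: "int \<Rightarrow> complex"
  assumes "M \<ge> 0" "s \<in> {c..<c+M}" "t \<in> {c..<c+M}"
  shows "(cmod (w s - w t))^2 \<le> real_of_int M * (\<Sum>r\<in>{c..<c+M-1}. (cmod (w r - w (r+1)))^2)"
proof -
  let ?A = "(\<Sum>r\<in>{c..<c+M-1}. cmod (w r - w (r+1)))"
  have key: "cmod (w q - w p) \<le> ?A" if "p \<le> q" "p \<in> {c..<c+M}" "q \<in> {c..<c+M}" for p q
  proof -
    have "cmod (w q - w p) \<le> (\<Sum>r\<in>{p..<q}. cmod (w r - w (r+1)))" by (rule tri_line) fact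
    also have "\<dots> \<le> ?A" using that by (intro sum_mono2) auto
    finally show ?thesis .
  qed
  have "cmod (w s - w t) \<le> ?A"
    using key[of s t] key[of t s] assms by (cases "s \<le> t") (auto simp: norm_minus_commute)
  then have "(cmod (w s - w t))^2 \<le> ?A^2" by (intro power_mono) auto
  also have "\<dots> \<le> real (card {c..<c+M-1}) * (\<Sum>r\<in>{c..<c+M-1}. (cmod (w r - w (r+1)))^2)"
    by (rule sum_sq_le_card) simp
  also have "\<dots> \<le> real_of_int M * (\<Sum>r\<in>{c..<c+M-1}. (cmod (w r - w (r+1)))^2)"
    using assms(1) by (intro mult_right_mono sum_nonneg) auto
  finally show ?thesis .
qed

lemma line_sum_bound:
  fixes w :: "int \<Rightarrow> complex"
  assumes "M \<ge> 0"
  shows "(\<Sum>s\<in>{c..<c+M}. \<Sum>t\<in>{c..<c+M}. (cmod (w s - w t))^2)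
     \<le> real_of_int M ^ 3 * (\<Sum>r\<in>{c..<c+M-1}. (cmod (w r - w (r+1)))^2)"
proof -
  let ?D = "(\<Sum>r\<in>{c..<c+M-1}. (cmod (w r - w (r+1)))^2)"
  have "(\<Sum>s\<in>{c..<c+M}. \<Sum>t\<in>{c..<c+M}. (cmod (w s - w t))^2)
      \<le> (\<Sum>s\<in>{c..<c+M}. \<Sum>t\<in>{c..<c+M}. real_of_int M * ?D)"
    by (intro sum_mono line_pair_bound assms) auto
  also have "\<dots> = real_of_int M ^ 3 * ?D" using assms by (simp add: power3_eq_cube)
  finally show ?thesis .
qed

definition base :: "('n::finite \<Rightarrow> int) \<Rightarrow> int \<Rightarrow> 'n \<Rightarrow> ('n \<Rightarrow> int) set" where
  "base c M i = {x \<in> cube c M. x i = c i}"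

lemma finite_base[simp]: "finite (base c M i)"
  unfolding base_def by simp

lemma cube_decomp:
  assumes "M > 0"
  shows "(\<Sum>x\<in>cube c M. F x) = (\<Sum>x0\<in>base c M i. \<Sum>s\<in>{c i..<c i + M}. F (x0(i := s)))"
proof -
  have "(\<Sum>x0\<in>base c M i. \<Sum>s\<in>{c i..<c i + M}. F (x0(i := s)))
      = (\<Sum>(x0,s)\<in>base c M i \<times> {c i..<c i + M}. F (x0(i := s)))"
    by (rule sum.cartesian_product)
  also have "\<dots> = (\<Sum>x\<in>cube c M. F x)"
  proof (rule sum.reindex_bij_witness[where i = "\<lambda>x. (x(i := c i), x i)" and j = "\<lambda>(x0,s). x0(i := s)"])
    fix a assume "a \<in> base c M i \<times> {c i..<c i + M}"
    then show "(case a of (x0, s) \<Rightarrow> x0(i := s)) \<in> cube c M"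
      "((case a of (x0, s) \<Rightarrow> x0(i := s))(i := c i), (case a of (x0, s) \<Rightarrow> x0(i := s)) i) = a"
      by (auto simp: base_def cube_def)
  next
    fix b assume "b \<in> cube c M"
    then show "(b(i := c i), b i) \<in> base c M i \<times> {c i..<c i + M}"
      "(case (b(i := c i), b i) of (x0, s) \<Rightarrow> x0(i := s)) = b"
      using assms by (auto simp: base_def cube_def)
  qed auto
  finally show ?thesis by simp
qed

lemma card_base:
  assumes "M > 0"
  shows "real (card (base (c::'n::finite \<Rightarrow> int) M i)) * real_of_int M = real_of_int M ^ CARD('n::finite)"
proof -
  have "real (card (cube (c::'n \<Rightarrow> int) M)) = (\<Sum>x\<in>cube c M. 1)" by simp
  also have "\<dots> = (\<Sum>x0\<in>base c M i. \<Sum>s\<in>{c i..<c i + M}. 1)" by (rule cube_decomp[OF assms])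
  also have "\<dots> = real (card (base c M i)) * real_of_int M" using assms by simp
  finally show ?thesis using card_cube[of M c] assms by simp
qed

definition Edir :: "('n::finite \<Rightarrow> int) set \<Rightarrow> 'n \<Rightarrow> (('n \<Rightarrow> int) \<Rightarrow> complex) \<Rightarrow> real" where
  "Edir S i v = (\<Sum>x\<in>{x \<in> S. x(i := x i + 1) \<in> S}. (cmod (v x - v (x(i := x i + 1))))^2)"

definition Eall :: "('n::finite \<Rightarrow> int) set \<Rightarrow> (('n \<Rightarrow> int) \<Rightarrow> complex) \<Rightarrow> real" where
  "Eall S v = (\<Sum>i\<in>UNIV. Edir S i v)"

lemma Edir_nonneg: "Edir S i v \<ge> 0" unfolding Edir_def by (intro sum_nonneg) auto
lemma Eall_nonneg: "Eall S v \<ge> 0" unfolding Eall_def by (intro sum_nonneg Edir_nonneg)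

lemma Edir_le_Eall: "Edir S i v \<le> Eall S v"
  unfolding Eall_def by (rule member_le_sum) (auto intro: Edir_nonneg)

lemma Edir_cube:
  assumes "M > 0"
  shows "Edir (cube c M) i v = (\<Sum>x0\<in>base c M i. \<Sum>r\<in>{c i..<c i + M - 1}.
            (cmod (v (x0(i := r)) - v (x0(i := r + 1))))^2)"
proof -
  let ?F = "\<lambda>x. if x i + 1 < c i + M then (cmod (v x - v (x(i := x i + 1))))^2 else 0"
  have fin: "finite (cube c M)" by simp
  have seteq: "{x \<in> cube c M. x(i := x i + 1) \<in> cube c M} = {x \<in> cube c M. x i + 1 < c i + M}"
  proof (intro set_eqI iffI)
    fix x assume "x \<in> {x \<in> cube c M. x i + 1 < c i + M}"
    then have x: "x \<in> cube c M" "x i + 1 < c i + M" by auto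
    have "c i \<le> x i" using x(1) unfolding cube_def by auto
    have "c \<mu> \<le> (x(i := x i + 1)) \<mu> \<and> (x(i := x i + 1)) \<mu> < c \<mu> + M" for \<mu>
    proof (cases "\<mu> = i")
      case True then show ?thesis using x(2) \<open>c i \<le> x i\<close> by simp
    next
      case False then show ?thesis using x(1) unfolding cube_def by simp
    qed
    then show "x \<in> {x \<in> cube c M. x(i := x i + 1) \<in> cube c M}" using x unfolding cube_def by simp
  next
    fix x assume "x \<in> {x \<in> cube c M. x(i := x i + 1) \<in> cube c M}"
    then have "x(i := x i + 1) \<in> cube c M" by auto
    then show "x \<in> {x \<in> cube c M. x i + 1 < c i + M}" using \<open>x \<in> {x \<in> cube c M. x(i := x i + 1) \<in> cube c M}\<close>
      unfolding cube_def by (auto dest!: spec[of _ i])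
  qed
  have inner: "(\<Sum>s\<in>{c i..<c i + M}. ?F (x0(i := s))) = (\<Sum>r\<in>{c i..<c i + M - 1}.
            (cmod (v (x0(i := r)) - v (x0(i := r + 1))))^2)" for x0
  proof -
    have "(\<Sum>s\<in>{c i..<c i + M}. ?F (x0(i := s)))
        = (\<Sum>s\<in>{c i..<c i + M}. if s \<in> {c i..<c i + M - 1} then (cmod (v (x0(i := s)) - v (x0(i := s + 1))))^2 else 0)"
      by (intro sum.cong) auto
    also have "\<dots> = (\<Sum>s\<in>{c i..<c i + M} \<inter> {c i..<c i + M - 1}. (cmod (v (x0(i := s)) - v (x0(i := s + 1))))^2)"
      by (rule sum.inter_restrict[symmetric]) simp
    also have "\<dots> = (\<Sum>r\<in>{c i..<c i + M - 1}. (cmod (v (x0(i := r)) - v (x0(i := r + 1))))^2)"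
      by (rule sum.cong) auto
    finally show ?thesis .
  qed
  have "Edir (cube c M) i v = (\<Sum>x\<in>cube c M. ?F x)"
    unfolding Edir_def seteq
    by (subst sum.inter_filter[symmetric, OF fin]) auto
  also have "\<dots> = (\<Sum>x0\<in>base c M i. \<Sum>s\<in>{c i..<c i + M}. ?F (x0(i := s)))"
    by (rule cube_decomp[OF assms])
  also have "\<dots> = (\<Sum>x0\<in>base c M i. \<Sum>r\<in>{c i..<c i + M - 1}.
            (cmod (v (x0(i := r)) - v (x0(i := r + 1))))^2)"
    by (rule sum.cong[OF refl]) (rule inner)
  finally show ?thesis .
qed

lemma dir_pair_bound:
  assumes "M > 0"
  shows "(\<Sum>x\<in>cube c M. \<Sum>t\<in>{c i..<c i + M}. (cmod (v x - v (x(i := t))))^2)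
       \<le> real_of_int M ^ 3 * Edir (cube c M) i v"
proof -
  have "(\<Sum>x\<in>cube c M. \<Sum>t\<in>{c i..<c i + M}. (cmod (v x - v (x(i := t))))^2)
      = (\<Sum>x0\<in>base c M i. \<Sum>s\<in>{c i..<c i + M}. \<Sum>t\<in>{c i..<c i + M}.
           (cmod (v (x0(i := s)) - v (x0(i := t))))^2)"
    by (subst cube_decomp[OF assms, of _ _ i]) simp
  also have "\<dots> \<le> (\<Sum>x0\<in>base c M i. real_of_int M ^ 3 * (\<Sum>r\<in>{c i..<c i + M - 1}.
            (cmod (v (x0(i := r)) - v (x0(i := r + 1))))^2))"
    by (intro sum_mono line_sum_bound[where w = "\<lambda>s. v (x0(i := s))" for x0, simplified]) (use assms in auto)
  also have "\<dots> = real_of_int M ^ 3 * Edir (cube c M) i v"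
    by (simp add: Edir_cube[OF assms] sum_distrib_left)
  finally show ?thesis .
qed

definition mix :: "'n set \<Rightarrow> ('n \<Rightarrow> int) \<Rightarrow> ('n \<Rightarrow> int) \<Rightarrow> ('n \<Rightarrow> int)" where
  "mix J x z = (\<lambda>\<mu>. if \<mu> \<in> J then z \<mu> else x \<mu>)"

lemma mix_cube: "x \<in> cube c M \<Longrightarrow> z \<in> cube c M \<Longrightarrow> mix J x z \<in> cube c M"
  unfolding cube_def mix_def by auto

lemma mix_mix1: "mix J (mix J x z) (mix J z x) = x" by (auto simp: mix_def fun_eq_iff)
lemma mix_mix2: "mix J (mix J z x) (mix J x z) = z" by (auto simp: mix_def fun_eq_iff)
lemma mix_notin: "i \<notin> J \<Longrightarrow> mix J z x i = z i" by (simp add: mix_def)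

lemma swap_sum:
  assumes "i \<notin> J"
  shows "(\<Sum>x\<in>cube c M. \<Sum>z\<in>cube c M. \<phi> (mix J x z) ((mix J x z)(i := z i)))
       = (\<Sum>x\<in>cube c M. \<Sum>z\<in>cube c M. \<phi> x (x(i := z i)))"
proof -
  have "(\<Sum>x\<in>cube c M. \<Sum>z\<in>cube c M. \<phi> (mix J x z) ((mix J x z)(i := z i)))
      = (\<Sum>(x,z)\<in>cube c M \<times> cube c M. \<phi> (mix J x z) ((mix J x z)(i := z i)))"
    by (rule sum.cartesian_product)
  also have "\<dots> = (\<Sum>(x,z)\<in>cube c M \<times> cube c M. \<phi> x (x(i := z i)))"
  proof (rule sum.reindex_bij_witness[where i = "\<lambda>(x,z). (mix J x z, mix J z x)" and j = "\<lambda>(x,z). (mix J x z, mix J z x)"])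
    fix a assume "a \<in> cube c M \<times> cube c M"
    then obtain x z where a: "a = (x,z)" "x \<in> cube c M" "z \<in> cube c M" by auto
    show "(case (case a of (x, z) \<Rightarrow> (mix J x z, mix J z x)) of (x, z) \<Rightarrow> (mix J x z, mix J z x)) = a"
      unfolding a by (simp add: mix_mix1 mix_mix2)
    show "(case a of (x, z) \<Rightarrow> (mix J x z, mix J z x)) \<in> cube c M \<times> cube c M"
      unfolding a using a by (simp add: mix_cube)
    show "(case case a of (x, z) \<Rightarrow> (mix J x z, mix J z x) of (x, z) \<Rightarrow> \<phi> x (x(i := z i))) =
       (case a of (x, z) \<Rightarrow> \<phi> (mix J x z) ((mix J x z)(i := z i)))"
      unfolding a using assms by (simp add: mix_notin)
  next
    fix a assume "a \<in> cube c M \<times> cube c M"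
    then obtain x z where a: "a = (x,z)" "x \<in> cube c M" "z \<in> cube c M" by auto
    show "(case (case a of (x, z) \<Rightarrow> (mix J x z, mix J z x)) of (x, z) \<Rightarrow> (mix J x z, mix J z x)) = a"
      unfolding a by (simp add: mix_mix1 mix_mix2)
    show "(case a of (x, z) \<Rightarrow> (mix J x z, mix J z x)) \<in> cube c M \<times> cube c M"
      unfolding a using a by (simp add: mix_cube)
  qed
  also have "\<dots> = (\<Sum>x\<in>cube c M. \<Sum>z\<in>cube c M. \<phi> x (x(i := z i)))"
    by (rule sum.cartesian_product[symmetric])
  finally show ?thesis .
qed

lemma fiber_sum:
  assumes "M > 0"
  shows "(\<Sum>z\<in>cube c M. h (z i)) = real (card (base c M i)) * (\<Sum>t\<in>{c i..<c i + M}. h t)"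
proof -
  have "(\<Sum>z\<in>cube c M. h (z i)) = (\<Sum>z0\<in>base c M i. \<Sum>s\<in>{c i..<c i + M}. h ((z0(i := s)) i))"
    by (rule cube_decomp[OF assms])
  also have "\<dots> = real (card (base c M i)) * (\<Sum>t\<in>{c i..<c i + M}. h t)" by simp
  finally show ?thesis .
qed

lemma dir_full:
  assumes "M > 0"
  shows "(\<Sum>x\<in>cube c M. \<Sum>z\<in>cube (c::'n::finite \<Rightarrow> int) M. (cmod (v x - v (x(i := z i))))^2)
     \<le> real_of_int M ^ (CARD('n) + 2) * Edir (cube c M) i v"
proof -
  have "(\<Sum>x\<in>cube c M. \<Sum>z\<in>cube c M. (cmod (v x - v (x(i := z i))))^2)
      = (\<Sum>x\<in>cube c M. real (card (base c M i)) * (\<Sum>t\<in>{c i..<c i + M}. (cmod (v x - v (x(i := t))))^2))"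
    by (intro sum.cong refl fiber_sum[OF assms])
  also have "\<dots> = real (card (base c M i)) * (\<Sum>x\<in>cube c M. \<Sum>t\<in>{c i..<c i + M}. (cmod (v x - v (x(i := t))))^2)"
    by (simp add: sum_distrib_left)
  also have "\<dots> \<le> real (card (base c M i)) * (real_of_int M ^ 3 * Edir (cube c M) i v)"
    by (intro mult_left_mono dir_pair_bound assms) auto
  also have "\<dots> = (real (card (base c M i)) * real_of_int M) * (real_of_int M * real_of_int M) * Edir (cube c M) i v"
    by (simp add: power3_eq_cube mult_ac)
  also have "\<dots> = real_of_int M ^ (CARD('n) + 2) * Edir (cube c M) i v"
    by (simp add: card_base[OF assms] power_add power2_eq_square)
  finally show ?thesis .
qed

lemma sq_tri: "(cmod (a - (c::complex)))^2 \<le> 2 * (cmod (a - b))^2 + 2 * (cmod (b - c))^2"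
proof -
  have "cmod (a - c) \<le> cmod (a - b) + cmod (b - c)" by (rule norm_diff_triangle_ineq[of a b b c, simplified])
  then have "(cmod (a - c))^2 \<le> (cmod (a - b) + cmod (b - c))^2" by (intro power_mono) auto
  also have "\<dots> \<le> 2 * (cmod (a - b))^2 + 2 * (cmod (b - c))^2"
  proof -
    have "0 \<le> (cmod (a - b) - cmod (b - c))^2" by simp
    then show ?thesis by (simp add: power2_eq_square algebra_simps)
  qed
  finally show ?thesis .
qed

lemma mix_poincare:
  assumes "M > 0" "finite J"
  shows "(\<Sum>x\<in>cube c M. \<Sum>z\<in>cube (c::'n::finite \<Rightarrow> int) M. (cmod (v x - v (mix J x z)))^2)
     \<le> 4 ^ card J * real_of_int M ^ (CARD('n) + 2) * Eall (cube c M) v"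
  using assms(2)
proof (induction J rule: finite_induct)
  case empty
  have "0 \<le> real_of_int M ^ (CARD('n)+2)" using assms(1) by simp
  then have "0 \<le> real_of_int M ^ (CARD('n)+2) * Eall (cube c M) v" by (rule mult_nonneg_nonneg[OF _ Eall_nonneg])
  then show ?case by (simp add: mix_def)
next
  case (insert i J)
  let ?K = "real_of_int M ^ (CARD('n) + 2) * Eall (cube c M) v"
  have "0 \<le> real_of_int M ^ (CARD('n)+2)" using assms(1) by simp
  then have K: "?K \<ge> 0" by (rule mult_nonneg_nonneg[OF _ Eall_nonneg])
  have mi: "mix (insert i J) x z = (mix J x z)(i := z i)" for x z by (auto simp: mix_def)
  have "(\<Sum>x\<in>cube c M. \<Sum>z\<in>cube c M. (cmod (v x - v (mix (insert i J) x z)))^2)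
      \<le> (\<Sum>x\<in>cube c M. \<Sum>z\<in>cube c M. 2 * (cmod (v x - v (mix J x z)))^2
             + 2 * (cmod (v (mix J x z) - v ((mix J x z)(i := z i))))^2)"
    unfolding mi by (intro sum_mono sq_tri)
  also have "\<dots> = 2 * (\<Sum>x\<in>cube c M. \<Sum>z\<in>cube c M. (cmod (v x - v (mix J x z)))^2)
      + 2 * (\<Sum>x\<in>cube c M. \<Sum>z\<in>cube c M. (cmod (v (mix J x z) - v ((mix J x z)(i := z i))))^2)"
    by (simp add: sum.distrib sum_distrib_left)
  also have "(\<Sum>x\<in>cube c M. \<Sum>z\<in>cube c M. (cmod (v (mix J x z) - v ((mix J x z)(i := z i))))^2)
      = (\<Sum>x\<in>cube c M. \<Sum>z\<in>cube c M. (cmod (v x - v (x(i := z i))))^2)"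
    by (rule swap_sum[where \<phi> = "\<lambda>p q. (cmod (v p - v q))^2"]) fact
  also have "\<dots> \<le> real_of_int M ^ (CARD('n) + 2) * Edir (cube c M) i v"
    by (rule dir_full[OF assms(1)])
  also have "\<dots> \<le> ?K"
    using assms(1) by (intro mult_left_mono Edir_le_Eall) auto
  finally have "(\<Sum>x\<in>cube c M. \<Sum>z\<in>cube c M. (cmod (v x - v (mix (insert i J) x z)))^2)
      \<le> 2 * (4 ^ card J * ?K) + 2 * ?K"
    using insert.IH by linarith
  also have "\<dots> \<le> 4 ^ card (insert i J) * ?K"
  proof -
    have "(1::real) \<le> 4 ^ card J" by simp
    then have "2 * (4 ^ card J) + 2 \<le> (4::real) ^ card (insert i J)" using insert by simp
    then show ?thesis using K by (metis distrib_right mult.assoc mult_right_mono)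
  qed
  finally show ?case by (simp add: mult.assoc)
qed

lemma cube_poincare:
  assumes "M > 0"
  shows "(\<Sum>x\<in>cube c M. \<Sum>z\<in>cube (c::'n::finite \<Rightarrow> int) M. (cmod (v x - v z))^2)
     \<le> 4 ^ CARD('n) * real_of_int M ^ (CARD('n) + 2) * Eall (cube c M) v"
proof -
  have e: "mix UNIV = (\<lambda>x z. z)" by (auto simp: mix_def fun_eq_iff)
  from mix_poincare[OF assms, where J="UNIV :: 'n set"] show ?thesis unfolding e by simp
qed

definition sh :: "'n \<Rightarrow> ('n \<Rightarrow> int) \<Rightarrow> ('n \<Rightarrow> int)" where
  "sh \<mu> x = x(\<mu> := x \<mu> + 1)"
definition dn :: "'n \<Rightarrow> ('n \<Rightarrow> int) \<Rightarrow> ('n \<Rightarrow> int)" where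
  "dn \<mu> x = x(\<mu> := x \<mu> - 1)"

lemma sh_dn[simp]: "sh \<mu> (dn \<mu> x) = x" "dn \<mu> (sh \<mu> x) = x"
  by (auto simp: sh_def dn_def fun_eq_iff)

lemma inj_sh: "inj (sh \<mu>)"
  by (metis injI sh_dn(2))

definition lap :: "('n::finite \<Rightarrow> int) set \<Rightarrow> (('n \<Rightarrow> int) \<Rightarrow> complex) \<Rightarrow> ('n \<Rightarrow> int) \<Rightarrow> complex" where
  "lap S g x = (\<Sum>\<mu>\<in>UNIV. (if sh \<mu> x \<in> S then g x - g (sh \<mu> x) else 0)
                         + (if dn \<mu> x \<in> S then g x - g (dn \<mu> x) else 0))"

lemma neumann_lap_eq:
  assumes "x \<in> S"
  shows "neumann_lap eta S f x = - complex_of_real (1 / eta ^ 2) * lap S f x"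
proof -
  have "(let xp = x(\<mu> := x \<mu> + 1); xm = x(\<mu> := x \<mu> - 1) in
             (if xp \<in> S then f xp else f x) - 2 * f x + (if xm \<in> S then f xm else f x))
      = - ((if sh \<mu> x \<in> S then f x - f (sh \<mu> x) else 0)
                         + (if dn \<mu> x \<in> S then f x - f (dn \<mu> x) else 0))" for \<mu>
    unfolding Let_def sh_def dn_def by (auto simp: algebra_simps)
  then have s: "(\<Sum>\<mu>\<in>UNIV. (let xp = x(\<mu> := x \<mu> + 1); xm = x(\<mu> := x \<mu> - 1) in
             (if xp \<in> S then f xp else f x) - 2 * f x + (if xm \<in> S then f xm else f x)))
      = - lap S f x"
    unfolding lap_def by (simp only: sum_negf[symmetric])
  show ?thesis using assms unfolding neumann_lap_def s by simp
qed

lemma dirichlet: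
  assumes "finite S"
  shows "(\<Sum>x\<in>S. cnj (u x) * lap S g x)
       = (\<Sum>\<mu>\<in>UNIV. \<Sum>x\<in>{x \<in> S. sh \<mu> x \<in> S}. (cnj (u x) - cnj (u (sh \<mu> x))) * (g x - g (sh \<mu> x)))"
proof -
  have one: "(\<Sum>x\<in>S. cnj (u x) * ((if sh \<mu> x \<in> S then g x - g (sh \<mu> x) else 0)
                         + (if dn \<mu> x \<in> S then g x - g (dn \<mu> x) else 0)))
     = (\<Sum>x\<in>{x \<in> S. sh \<mu> x \<in> S}. (cnj (u x) - cnj (u (sh \<mu> x))) * (g x - g (sh \<mu> x)))" for \<mu>
  proof -
    have A: "(\<Sum>x\<in>S. cnj (u x) * (if sh \<mu> x \<in> S then g x - g (sh \<mu> x) else 0))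
        = (\<Sum>x\<in>{x \<in> S. sh \<mu> x \<in> S}. cnj (u x) * (g x - g (sh \<mu> x)))"
      using assms by (simp add: sum.inter_filter[symmetric] if_distrib cong: if_cong)
    have B0: "(\<Sum>x\<in>S. cnj (u x) * (if dn \<mu> x \<in> S then g x - g (dn \<mu> x) else 0))
        = (\<Sum>x\<in>{x \<in> S. dn \<mu> x \<in> S}. cnj (u x) * (g x - g (dn \<mu> x)))"
      using assms by (simp add: sum.inter_filter[symmetric] if_distrib cong: if_cong)
    have B1: "(\<Sum>x\<in>{x \<in> S. dn \<mu> x \<in> S}. cnj (u x) * (g x - g (dn \<mu> x)))
        = (\<Sum>x\<in>{x \<in> S. sh \<mu> x \<in> S}. cnj (u (sh \<mu> x)) * (g (sh \<mu> x) - g x))"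
      by (rule sum.reindex_bij_witness[where i = "sh \<mu>" and j = "dn \<mu>"]) auto
    have "(\<Sum>x\<in>S. cnj (u x) * ((if sh \<mu> x \<in> S then g x - g (sh \<mu> x) else 0)
                         + (if dn \<mu> x \<in> S then g x - g (dn \<mu> x) else 0)))
       = (\<Sum>x\<in>S. cnj (u x) * (if sh \<mu> x \<in> S then g x - g (sh \<mu> x) else 0))
         + (\<Sum>x\<in>S. cnj (u x) * (if dn \<mu> x \<in> S then g x - g (dn \<mu> x) else 0))"
      by (simp add: distrib_left sum.distrib)
    also have "\<dots> = (\<Sum>x\<in>{x \<in> S. sh \<mu> x \<in> S}. cnj (u x) * (g x - g (sh \<mu> x))
                    + cnj (u (sh \<mu> x)) * (g (sh \<mu> x) - g x))"
      unfolding A B0 B1 by (simp add: sum.distrib)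
    also have "\<dots> = (\<Sum>x\<in>{x \<in> S. sh \<mu> x \<in> S}. (cnj (u x) - cnj (u (sh \<mu> x))) * (g x - g (sh \<mu> x)))"
      by (intro sum.cong refl) (simp add: algebra_simps)
    finally show ?thesis .
  qed
  have "(\<Sum>x\<in>S. cnj (u x) * lap S g x) = (\<Sum>\<mu>\<in>UNIV. \<Sum>x\<in>S. cnj (u x) * ((if sh \<mu> x \<in> S then g x - g (sh \<mu> x) else 0)
                         + (if dn \<mu> x \<in> S then g x - g (dn \<mu> x) else 0)))"
    unfolding lap_def by (simp add: sum_distrib_left sum.swap[of _ S])
  also have "\<dots> = (\<Sum>\<mu>\<in>UNIV. \<Sum>x\<in>{x \<in> S. sh \<mu> x \<in> S}. (cnj (u x) - cnj (u (sh \<mu> x))) * (g x - g (sh \<mu> x)))"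
    using one by simp
  finally show ?thesis .
qed

lemma eta_of_eq: "L > 0 \<Longrightarrow> eta_of L k = 1 / real L ^ k"
  unfolding eta_of_def by (simp add: powr_minus powr_realpow divide_inverse)

lemma finite_Omega[simp]: "finite (Omega L m)"
  unfolding Omega_box by simp

lemma finite_Omega_j[simp]: "finite (Omega_j L m k)"
  unfolding Omega_j_def by simp

lemma Omega_j_dvd: "c \<in> Omega_j L m k \<Longrightarrow> \<forall>\<mu>. int L ^ k dvd c \<mu>"
  unfolding Omega_j_def by auto

lemma corner_Block:
  assumes "L > 0" "k \<le> m" "x \<in> Omega L m"
  shows "x \<in> Block L k (corner (int L ^ k) x)"
  unfolding Block_box using assms by (intro in_box_corner) simp

lemma fiber_corner:
  assumes "L > 0" "k \<le> m" "c \<in> Omega_j L m k"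
  shows "{x \<in> Omega L m. corner (int L ^ k) x = c} = Block L k c"
proof (intro set_eqI iffI)
  fix x assume "x \<in> {x \<in> Omega L m. corner (int L ^ k) x = c}"
  then show "x \<in> Block L k c" using corner_Block[OF assms(1,2)] by auto
next
  fix x assume x: "x \<in> Block L k c"
  have "x \<in> Omega L m" using Block_sub_Omega[OF assms] x by auto
  moreover have "corner (int L ^ k) x = c"
    using assms x Omega_j_dvd[OF assms(3)] by (intro corner_of_box) (auto simp: Block_box)
  ultimately show "x \<in> {x \<in> Omega L m. corner (int L ^ k) x = c}" by auto
qed

lemma sum_Omega_blocks:
  assumes "L > 0" "k \<le> m"
  shows "(\<Sum>x\<in>Omega L m. F x) = (\<Sum>c\<in>Omega_j L m k. \<Sum>x\<in>Block L k c. F x)"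
proof -
  have "(\<Sum>c\<in>Omega_j L m k. sum F {x \<in> Omega L m. corner (int L ^ k) x = c}) = sum F (Omega L m)"
    by (rule sum.group) (use corner_in_Omega_j[OF assms] in auto)
  moreover have "(\<Sum>c\<in>Omega_j L m k. sum F {x \<in> Omega L m. corner (int L ^ k) x = c})
      = (\<Sum>c\<in>Omega_j L m k. \<Sum>x\<in>Block L k c. F x)"
    by (intro sum.cong refl) (simp add: fiber_corner[OF assms])
  ultimately show ?thesis by simp
qed

lemma Q_eq:
  assumes "L > 0" "k \<le> m" "x \<in> Omega L m"
  shows "Qadj L m k (Qavg L m k g) (x::'n::finite \<Rightarrow> int)
       = complex_of_real (1 / real L ^ (k * CARD('n))) * (\<Sum>z\<in>Block L k (corner (int L ^ k) x). g z)"
proof -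
  have "(\<lambda>\<mu>. int L ^ k * (x \<mu> div int L ^ k)) = corner (int L ^ k) x" by (simp add: corner_def)
  then show ?thesis
    using assms corner_in_Omega_j[OF assms] unfolding Qadj_def Qavg_def by simp
qed

lemma Hop_eq:
  assumes "L > 0" "k \<le> m" "x \<in> Omega L m"
  shows "Hop a mu0 L k m g (x::'n::finite \<Rightarrow> int)
     = complex_of_real (real L ^ (2*k)) * lap (Omega L m) g x
       + complex_of_real (mubar_j mu0 L k) * g x
       + complex_of_real (a_j a L k) * (complex_of_real (1 / real L ^ (k * CARD('n))) *
            (\<Sum>z\<in>Block L k (corner (int L ^ k) x). g z))"
proof -
  have e: "1 / (eta_of L k)^2 = real L ^ (2*k)"
    using assms(1) by (simp add: eta_of_eq power_mult power_divide mult.commute)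
  have "neumann_lap (eta_of L k) (Omega L m) g x = - complex_of_real (real L ^ (2*k)) * lap (Omega L m) g x"
    using neumann_lap_eq[OF assms(3), of "eta_of L k" g] unfolding e .
  then show ?thesis using assms unfolding Hop_def by (simp add: Q_eq)
qed

lemma bond_identity:
  fixes a b :: complex and p q :: real
  assumes "p > 0" "q > 0"
  shows "Re ((cnj (of_real p * a) - cnj (of_real q * b)) * (of_real (1/p) * a - of_real (1/q) * b))
       = (cmod (a - b))^2 - (p/q + q/p - 2) * Re (cnj a * b)"
proof (cases a; cases b)
  fix a1 a2 b1 b2 assume ab: "a = Complex a1 a2" "b = Complex b1 b2"
  show ?thesis unfolding ab using assms
    by (simp add: cmod_power2) (simp add: field_simps power2_eq_square)
qed

lemma exp_neg_bound: fixes y :: real assumes "0 \<le> y" shows "exp (-y) \<le> 1 - y + y^2"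
proof -
  have "1 + y \<le> exp y" by (rule exp_ge_add_one_self)
  have "1 \<le> (1 + y) * (1 - y + y^2)" using assms by (simp add: algebra_simps power2_eq_square)
  also have "\<dots> \<le> exp y * (1 - y + y^2)"
  proof (rule mult_right_mono)
    show "1 + y \<le> exp y" by (rule exp_ge_add_one_self)
    have "0 \<le> (y - 1/2)^2 + 3/4" by simp
    then show "0 \<le> 1 - y + y^2" by (simp add: power2_eq_square algebra_simps)
  qed
  finally have "1 \<le> exp y * (1 - y + y^2)" .
  then show ?thesis by (simp add: exp_minus field_simps)
qed

lemma cosh_bound: fixes s :: real assumes "\<bar>s\<bar> \<le> 1" shows "exp s + exp (-s) - 2 \<le> 2 * s^2"
proof -
  have *: "exp t + exp (-t) - 2 \<le> 2 * t^2" if "0 \<le> t" "t \<le> 1" for t :: real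
    using exp_bound[OF that] exp_neg_bound[OF that(1)] by simp
  show ?thesis
  proof (cases "s \<ge> 0")
    case True then show ?thesis using * assms by simp
  next
    case False then show ?thesis using *[of "-s"] assms by simp
  qed
qed

lemma exp_sub1_bound: fixes s :: real assumes "\<bar>s\<bar> \<le> 1" shows "\<bar>exp s - 1\<bar> \<le> 2 * \<bar>s\<bar>"
proof (cases "s \<ge> 0")
  case True
  then have "exp s \<le> 1 + s + s^2" using exp_bound assms by simp
  moreover have "s^2 \<le> s" using True assms by (simp add: power2_eq_square mult_le_one mult_left_le_one_le)
  moreover have "1 \<le> exp s" using True by simp
  ultimately show ?thesis using True by simp
next
  case False
  have "1 + s \<le> exp s" by (rule exp_ge_add_one_self)
  moreover have "exp s \<le> 1" using False by simp
  ultimately have "1 - exp s \<le> - (2 * s)" using False by linarith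
  then show ?thesis using \<open>exp s \<le> 1\<close> False by (simp add: abs_if)
qed

lemma norm_diff_sq: "(cmod (a - b))^2 = (cmod a)^2 + (cmod b)^2 - 2 * Re (cnj a * b)"
  by (cases a; cases b) (simp add: cmod_power2, simp add: power2_eq_square algebra_simps)

lemma re_cnj_le: "Re (cnj a * b) \<le> cmod a * cmod b"
proof -
  have "Re (cnj a * b) \<le> cmod (cnj a * b)" by (rule complex_Re_le_cmod)
  also have "\<dots> = cmod a * cmod b" by (simp add: norm_mult)
  finally show ?thesis .
qed

lemma two_ab: "2 * (x::real) * y \<le> x^2 + y^2"
proof -
  have "0 \<le> (x - y)^2" by simp
  then show ?thesis by (simp add: power2_eq_square algebra_simps)
qed

lemma bond_bound:
  fixes a b :: complex and s1 s2 t :: real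
  assumes "\<bar>s1 - s2\<bar> \<le> t" "t \<le> 1"
  shows "Re ((cnj (of_real (exp s1) * a) - cnj (of_real (exp s2) * b))
              * (of_real (exp (-s1)) * a - of_real (exp (-s2)) * b))
         \<ge> (cmod (a - b))^2 - t^2 * ((cmod a)^2 + (cmod b)^2)"
proof -
  let ?f = "exp s1 / exp s2 + exp s2 / exp s1 - 2"
  have id: "Re ((cnj (of_real (exp s1) * a) - cnj (of_real (exp s2) * b))
              * (of_real (exp (-s1)) * a - of_real (exp (-s2)) * b))
         = (cmod (a - b))^2 - ?f * Re (cnj a * b)"
    using bond_identity[of "exp s1" "exp s2" a b] by (simp add: exp_minus inverse_eq_divide)
  have f_eq: "?f = exp (s1 - s2) + exp (- (s1 - s2)) - 2" by (simp add: exp_diff exp_minus inverse_eq_divide)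
  have f0: "0 \<le> ?f"
  proof -
    have "1 + (s1 - s2) \<le> exp (s1 - s2)" "1 + (-(s1 - s2)) \<le> exp (-(s1 - s2))"
      by (rule exp_ge_add_one_self)+
    then show ?thesis unfolding f_eq by linarith
  qed
  have s1: "\<bar>s1 - s2\<bar> \<le> 1" using assms by linarith
  have "?f \<le> 2 * (s1 - s2)^2" unfolding f_eq by (rule cosh_bound[OF s1])
  also have "\<dots> \<le> 2 * t^2"
  proof -
    have "\<bar>s1 - s2\<bar>^2 \<le> t^2" by (rule power_mono[OF assms(1)]) simp
    then show ?thesis by simp
  qed
  finally have f2: "?f \<le> 2 * t^2" .
  have "?f * Re (cnj a * b) \<le> ?f * (cmod a * cmod b)" by (rule mult_left_mono[OF re_cnj_le f0])
  also have "\<dots> \<le> (2 * t^2) * (cmod a * cmod b)" by (rule mult_right_mono[OF f2]) simp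
  also have "\<dots> = t^2 * (2 * cmod a * cmod b)" by simp
  also have "\<dots> \<le> t^2 * ((cmod a)^2 + (cmod b)^2)" by (rule mult_left_mono[OF two_ab]) simp
  finally show ?thesis unfolding id by linarith
qed

lemma Edir_sh: "Edir S i v = (\<Sum>x\<in>{x \<in> S. sh i x \<in> S}. (cmod (v x - v (sh i x)))^2)"
  unfolding Edir_def sh_def ..

lemma lap_part:
  fixes v :: "('n::finite \<Rightarrow> int) \<Rightarrow> complex" and w :: "('n \<Rightarrow> int) \<Rightarrow> real"
  assumes S: "finite S" and W: "\<And>x \<mu>. x \<in> S \<Longrightarrow> sh \<mu> x \<in> S \<Longrightarrow> \<bar>w x - w (sh \<mu> x)\<bar> \<le> t"
    and t: "t \<le> 1"
  shows "Re (\<Sum>x\<in>S. cnj (of_real (exp (w x)) * v x) * lap S (\<lambda>z. of_real (exp (- w z)) * v z) x)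
       \<ge> Eall S v - 2 * real CARD('n) * t^2 * (\<Sum>x\<in>S. (cmod (v x))^2)"
proof -
  let ?N = "(\<Sum>x\<in>S. (cmod (v x))^2)"
  let ?B = "\<lambda>\<mu>. {x \<in> S. sh \<mu> x \<in> S}"
  have b1: "(\<Sum>x\<in>?B \<mu>. (cmod (v x))^2) \<le> ?N" for \<mu>
    using S by (intro sum_mono2) auto
  have b2: "(\<Sum>x\<in>?B \<mu>. (cmod (v (sh \<mu> x)))^2) \<le> ?N" for \<mu>
  proof -
    have "(\<Sum>x\<in>?B \<mu>. (cmod (v (sh \<mu> x)))^2) = (\<Sum>y\<in>sh \<mu> ` ?B \<mu>. (cmod (v y))^2)"
      by (subst sum.reindex) (auto intro: inj_on_subset[OF inj_sh])
    also have "\<dots> \<le> ?N" using S by (intro sum_mono2) auto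
    finally show ?thesis .
  qed
  have "Re (\<Sum>x\<in>S. cnj (of_real (exp (w x)) * v x) * lap S (\<lambda>z. of_real (exp (- w z)) * v z) x)
      = (\<Sum>\<mu>\<in>UNIV. \<Sum>x\<in>?B \<mu>. Re ((cnj (of_real (exp (w x)) * v x) - cnj (of_real (exp (w (sh \<mu> x))) * v (sh \<mu> x)))
            * (of_real (exp (- w x)) * v x - of_real (exp (- w (sh \<mu> x))) * v (sh \<mu> x))))"
    unfolding dirichlet[OF S] by (simp add: Re_sum)
  also have "\<dots> \<ge> (\<Sum>\<mu>\<in>UNIV. \<Sum>x\<in>?B \<mu>. (cmod (v x - v (sh \<mu> x)))^2 - t^2 * ((cmod (v x))^2 + (cmod (v (sh \<mu> x)))^2))"
    by (intro sum_mono bond_bound W t) auto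
  finally have A: "Re (\<Sum>x\<in>S. cnj (of_real (exp (w x)) * v x) * lap S (\<lambda>z. of_real (exp (- w z)) * v z) x)
      \<ge> (\<Sum>\<mu>\<in>UNIV. \<Sum>x\<in>?B \<mu>. (cmod (v x - v (sh \<mu> x)))^2 - t^2 * ((cmod (v x))^2 + (cmod (v (sh \<mu> x)))^2))" .
  have per: "(\<Sum>x\<in>?B \<mu>. (cmod (v x - v (sh \<mu> x)))^2 - t^2 * ((cmod (v x))^2 + (cmod (v (sh \<mu> x)))^2))
      \<ge> Edir S \<mu> v - t^2 * (2 * ?N)" for \<mu>
  proof -
    have "(\<Sum>x\<in>?B \<mu>. (cmod (v x - v (sh \<mu> x)))^2 - t^2 * ((cmod (v x))^2 + (cmod (v (sh \<mu> x)))^2))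
      = Edir S \<mu> v - t^2 * ((\<Sum>x\<in>?B \<mu>. (cmod (v x))^2) + (\<Sum>x\<in>?B \<mu>. (cmod (v (sh \<mu> x)))^2))"
      unfolding Edir_sh by (simp add: sum_subtractf sum_distrib_left sum.distrib distrib_left)
    moreover have "t^2 * ((\<Sum>x\<in>?B \<mu>. (cmod (v x))^2) + (\<Sum>x\<in>?B \<mu>. (cmod (v (sh \<mu> x)))^2)) \<le> t^2 * (2 * ?N)"
      using b1[of \<mu>] b2[of \<mu>] by (intro mult_left_mono) auto
    ultimately show ?thesis by linarith
  qed
  have "(\<Sum>\<mu>\<in>UNIV. \<Sum>x\<in>?B \<mu>. (cmod (v x - v (sh \<mu> x)))^2 - t^2 * ((cmod (v x))^2 + (cmod (v (sh \<mu> x)))^2))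
      \<ge> (\<Sum>\<mu>\<in>UNIV. Edir S \<mu> v - t^2 * (2 * ?N))"
    by (intro sum_mono per)
  also have "(\<Sum>\<mu>\<in>UNIV. Edir S \<mu> v - t^2 * (2 * ?N)) = Eall S v - 2 * real CARD('n) * t^2 * ?N"
    unfolding Eall_def by (simp add: sum_subtractf)
  finally show ?thesis using A by linarith
qed

lemma re_cnj_self: "Re (cnj z * z) = (cmod z)^2"
  by (cases z) (simp add: cmod_power2, simp add: power2_eq_square)

lemma block_T_nonneg:
  "(\<Sum>x\<in>B. \<Sum>z\<in>B. Re (cnj (v x) * v z)) \<ge> 0"
proof -
  have "(\<Sum>x\<in>B. \<Sum>z\<in>B. Re (cnj (v x) * v z)) = Re (cnj (sum v B) * sum v B)"
    by (simp add: cnj_sum sum_product Re_sum)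
  also have "\<dots> = (cmod (sum v B))^2" by (rule re_cnj_self)
  finally show ?thesis by simp
qed

lemma block_T_eq:
  assumes "finite B"
  shows "(\<Sum>x\<in>B. \<Sum>z\<in>B. Re (cnj (v x) * v z))
       = real (card B) * (\<Sum>x\<in>B. (cmod (v x))^2) - (1/2) * (\<Sum>x\<in>B. \<Sum>z\<in>B. (cmod (v x - v z))^2)"
proof -
  have "(\<Sum>x\<in>B. \<Sum>z\<in>B. (cmod (v x - v z))^2)
      = (\<Sum>x\<in>B. \<Sum>z\<in>B. (cmod (v x))^2 + (cmod (v z))^2 - 2 * Re (cnj (v x) * v z))"
    by (simp add: norm_diff_sq)
  also have "\<dots> = (\<Sum>x\<in>B. \<Sum>z\<in>B. (cmod (v x))^2) + (\<Sum>x\<in>B. \<Sum>z\<in>B. (cmod (v z))^2)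
        - 2 * (\<Sum>x\<in>B. \<Sum>z\<in>B. Re (cnj (v x) * v z))"
    by (simp add: sum_subtractf sum.distrib sum_distrib_left)
  also have "(\<Sum>x\<in>B. \<Sum>z\<in>B. (cmod (v x))^2) = real (card B) * (\<Sum>x\<in>B. (cmod (v x))^2)"
    by (simp add: sum_distrib_left)
  also have "(\<Sum>x\<in>B. \<Sum>z\<in>B. (cmod (v z))^2) = real (card B) * (\<Sum>x\<in>B. (cmod (v x))^2)"
    by simp
  finally show ?thesis by linarith
qed

lemma block_abs_bound:
  assumes "finite B"
  shows "(\<Sum>x\<in>B. \<Sum>z\<in>B. cmod (v x) * cmod (v z)) \<le> real (card B) * (\<Sum>x\<in>B. (cmod (v x))^2)"
proof -
  have "(\<Sum>x\<in>B. \<Sum>z\<in>B. cmod (v x) * cmod (v z)) \<le> (\<Sum>x\<in>B. \<Sum>z\<in>B. ((cmod (v x))^2 + (cmod (v z))^2) / 2)"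
  proof (intro sum_mono)
    fix x z show "cmod (v x) * cmod (v z) \<le> ((cmod (v x))^2 + (cmod (v z))^2) / 2"
      using two_ab[of "cmod (v x)" "cmod (v z)"] by simp
  qed
  also have "\<dots> = ((\<Sum>x\<in>B. \<Sum>z\<in>B. (cmod (v x))^2) + (\<Sum>x\<in>B. \<Sum>z\<in>B. (cmod (v z))^2)) / 2"
    by (simp add: sum_divide_distrib[symmetric] sum.distrib)
  also have "(\<Sum>x\<in>B. \<Sum>z\<in>B. (cmod (v x))^2) = real (card B) * (\<Sum>x\<in>B. (cmod (v x))^2)"
    by (simp add: sum_distrib_left)
  also have "(\<Sum>x\<in>B. \<Sum>z\<in>B. (cmod (v z))^2) = real (card B) * (\<Sum>x\<in>B. (cmod (v x))^2)"
    by simp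
  finally show ?thesis by simp
qed

lemma card_Block: "L > 0 \<Longrightarrow> real (card (Block L k (c::'n::finite \<Rightarrow> int))) = real L ^ (k * CARD('n))"
  unfolding Block_box by (simp add: card_cube power_mult nat_power_eq)

lemma pointwise_q:
  fixes p q :: complex and s1 s2 \<beta> :: real
  assumes "\<bar>s1 - s2\<bar> \<le> \<beta>" "\<beta> \<le> 1"
  shows "Re (cnj (of_real (exp s1) * p) * (of_real (exp (- s2)) * q)) \<ge> Re (cnj p * q) - 2 * \<beta> * (cmod p * cmod q)"
proof -
  have e: "cnj (of_real (exp s1) * p) * (of_real (exp (- s2)) * q) = of_real (exp (s1 - s2)) * (cnj p * q)"
    by (simp add: exp_diff exp_minus field_simps)
  have "\<bar>exp (s1 - s2) - 1\<bar> \<le> 2 * \<bar>s1 - s2\<bar>" by (rule exp_sub1_bound) (use assms in linarith)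
  also have "\<dots> \<le> 2 * \<beta>" using assms by simp
  finally have b: "\<bar>exp (s1 - s2) - 1\<bar> \<le> 2 * \<beta>" .
  have r: "\<bar>Re (cnj p * q)\<bar> \<le> cmod p * cmod q"
    using abs_Re_le_cmod[of "cnj p * q"] by (simp add: norm_mult)
  have "(exp (s1 - s2) - 1) * Re (cnj p * q) \<ge> - (\<bar>exp (s1 - s2) - 1\<bar> * \<bar>Re (cnj p * q)\<bar>)"
    by (metis abs_ge_minus_self abs_mult minus_le_iff)
  moreover have "\<bar>exp (s1 - s2) - 1\<bar> * \<bar>Re (cnj p * q)\<bar> \<le> 2 * \<beta> * (cmod p * cmod q)"
    by (rule mult_mono[OF b r]) (use assms in auto)
  ultimately have "(exp (s1 - s2) - 1) * Re (cnj p * q) \<ge> - (2 * \<beta> * (cmod p * cmod q))" by linarith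
  then show ?thesis unfolding e by (simp add: algebra_simps)
qed

lemma q_part:
  fixes v :: "('n::finite \<Rightarrow> int) \<Rightarrow> complex" and w :: "('n \<Rightarrow> int) \<Rightarrow> real"
  assumes L: "L > 0" "k \<le> m"
    and W: "\<And>c x z. c \<in> Omega_j L m k \<Longrightarrow> x \<in> Block L k c \<Longrightarrow> z \<in> Block L k c \<Longrightarrow> \<bar>w x - w z\<bar> \<le> \<beta>"
    and b: "0 \<le> \<beta>" "\<beta> \<le> 1"
  shows "Re (\<Sum>x\<in>Omega L m. cnj (of_real (exp (w x)) * v x)
              * (\<Sum>z\<in>Block L k (corner (int L ^ k) x). of_real (exp (- w z)) * v z))
      \<ge> (\<Sum>c\<in>Omega_j L m k. \<Sum>x\<in>Block L k c. \<Sum>z\<in>Block L k c. Re (cnj (v x) * v z))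
         - 2 * \<beta> * real L ^ (k * CARD('n)) * (\<Sum>x\<in>Omega L m. (cmod (v x))^2)"
proof -
  let ?B = "Block L k"
  have cx: "corner (int L ^ k) x = c" if "c \<in> Omega_j L m k" "x \<in> ?B c" for c x
    using fiber_corner[OF L that(1)] that(2) by auto
  have "(\<Sum>x\<in>Omega L m. cnj (of_real (exp (w x)) * v x)
              * (\<Sum>z\<in>Block L k (corner (int L ^ k) x). of_real (exp (- w z)) * v z))
      = (\<Sum>c\<in>Omega_j L m k. \<Sum>x\<in>?B c. cnj (of_real (exp (w x)) * v x)
              * (\<Sum>z\<in>Block L k (corner (int L ^ k) x). of_real (exp (- w z)) * v z))"
    by (rule sum_Omega_blocks[OF L])
  also have "\<dots> = (\<Sum>c\<in>Omega_j L m k. \<Sum>x\<in>?B c. \<Sum>z\<in>?B c. cnj (of_real (exp (w x)) * v x)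
              * (of_real (exp (- w z)) * v z))"
    by (intro sum.cong refl) (simp add: cx sum_distrib_left)
  finally have e0: "(\<Sum>x\<in>Omega L m. cnj (of_real (exp (w x)) * v x)
              * (\<Sum>z\<in>Block L k (corner (int L ^ k) x). of_real (exp (- w z)) * v z))
      = (\<Sum>c\<in>Omega_j L m k. \<Sum>x\<in>?B c. \<Sum>z\<in>?B c. cnj (of_real (exp (w x)) * v x)
              * (of_real (exp (- w z)) * v z))" .
  have e: "Re (\<Sum>x\<in>Omega L m. cnj (of_real (exp (w x)) * v x)
              * (\<Sum>z\<in>Block L k (corner (int L ^ k) x). of_real (exp (- w z)) * v z))
      = (\<Sum>c\<in>Omega_j L m k. \<Sum>x\<in>?B c. \<Sum>z\<in>?B c. Re (cnj (of_real (exp (w x)) * v x)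
              * (of_real (exp (- w z)) * v z)))" by (simp only: e0 Re_sum)
  have "(\<Sum>c\<in>Omega_j L m k. \<Sum>x\<in>?B c. \<Sum>z\<in>?B c. Re (cnj (of_real (exp (w x)) * v x)
              * (of_real (exp (- w z)) * v z)))
     \<ge> (\<Sum>c\<in>Omega_j L m k. \<Sum>x\<in>?B c. \<Sum>z\<in>?B c. Re (cnj (v x) * v z) - 2 * \<beta> * (cmod (v x) * cmod (v z)))"
    by (intro sum_mono pointwise_q W b) auto
  moreover have "(\<Sum>c\<in>Omega_j L m k. \<Sum>x\<in>?B c. \<Sum>z\<in>?B c. Re (cnj (v x) * v z) - 2 * \<beta> * (cmod (v x) * cmod (v z)))
      = (\<Sum>c\<in>Omega_j L m k. \<Sum>x\<in>?B c. \<Sum>z\<in>?B c. Re (cnj (v x) * v z))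
      - 2 * \<beta> * (\<Sum>c\<in>Omega_j L m k. \<Sum>x\<in>?B c. \<Sum>z\<in>?B c. cmod (v x) * cmod (v z))"
    by (simp only: sum_subtractf sum_distrib_left)
  ultimately have A: "(\<Sum>c\<in>Omega_j L m k. \<Sum>x\<in>?B c. \<Sum>z\<in>?B c. Re (cnj (of_real (exp (w x)) * v x)
              * (of_real (exp (- w z)) * v z)))
     \<ge> (\<Sum>c\<in>Omega_j L m k. \<Sum>x\<in>?B c. \<Sum>z\<in>?B c. Re (cnj (v x) * v z))
      - 2 * \<beta> * (\<Sum>c\<in>Omega_j L m k. \<Sum>x\<in>?B c. \<Sum>z\<in>?B c. cmod (v x) * cmod (v z))" by simp
  have "(\<Sum>c\<in>Omega_j L m k. \<Sum>x\<in>?B c. \<Sum>z\<in>?B c. cmod (v x) * cmod (v z))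
      \<le> (\<Sum>c\<in>Omega_j L m k. real (card (?B c)) * (\<Sum>x\<in>?B c. (cmod (v x))^2))"
    by (intro sum_mono block_abs_bound) (simp add: Block_box)
  also have "\<dots> = real L ^ (k * CARD('n)) * (\<Sum>c\<in>Omega_j L m k. \<Sum>x\<in>?B c. (cmod (v x))^2)"
    using L by (simp add: card_Block sum_distrib_left)
  also have "\<dots> = real L ^ (k * CARD('n)) * (\<Sum>x\<in>Omega L m. (cmod (v x))^2)"
    by (simp add: sum_Omega_blocks[OF L])
  finally have "2 * \<beta> * (\<Sum>c\<in>Omega_j L m k. \<Sum>x\<in>?B c. \<Sum>z\<in>?B c. cmod (v x) * cmod (v z))
     \<le> 2 * \<beta> * (real L ^ (k * CARD('n)) * (\<Sum>x\<in>Omega L m. (cmod (v x))^2))"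
    using b by (intro mult_left_mono) auto
  then show ?thesis using A unfolding e by (simp add: mult.assoc)
qed

lemma Edir_filter: "finite S \<Longrightarrow> Edir S i v = (\<Sum>x\<in>S. if sh i x \<in> S then (cmod (v x - v (sh i x)))^2 else 0)"
  unfolding Edir_sh by (simp add: sum.inter_filter)

lemma Eall_blocks:
  assumes L: "L > 0" "k \<le> m"
  shows "(\<Sum>c\<in>Omega_j L m k. Eall (Block L k c) v) \<le> Eall (Omega L m) (v::('n::finite \<Rightarrow> int) \<Rightarrow> complex)"
proof -
  have "(\<Sum>c\<in>Omega_j L m k. Edir (Block L k c) i v) \<le> Edir (Omega L m) i v" for i
  proof -
    have "(\<Sum>c\<in>Omega_j L m k. Edir (Block L k c) i v)
        = (\<Sum>c\<in>Omega_j L m k. \<Sum>x\<in>Block L k c. if sh i x \<in> Block L k c then (cmod (v x - v (sh i x)))^2 else 0)"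
      by (intro sum.cong refl Edir_filter) (simp add: Block_box)
    also have "\<dots> \<le> (\<Sum>c\<in>Omega_j L m k. \<Sum>x\<in>Block L k c. if sh i x \<in> Omega L m then (cmod (v x - v (sh i x)))^2 else 0)"
      using Block_sub_Omega[OF L] by (intro sum_mono) auto
    also have "\<dots> = Edir (Omega L m) i v"
      by (simp add: Edir_filter sum_Omega_blocks[OF L])
    finally show ?thesis .
  qed
  then have "(\<Sum>i\<in>UNIV. \<Sum>c\<in>Omega_j L m k. Edir (Block L k c) i v) \<le> (\<Sum>i\<in>UNIV. Edir (Omega L m) i v)"
    by (intro sum_mono) auto
  then show ?thesis unfolding Eall_def by (subst sum.swap) simp
qed

lemma comb:
  fixes Nk K ak P T N E Mr2 :: real
  assumes "0 < Nk" "1 \<le> K" "0 \<le> ak" "ak \<le> 1" "0 \<le> P" "P \<le> K * Nk * Mr2 * E" "0 \<le> T"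
    "T = Nk * N - P / 2"
  shows "Mr2 * E + (ak / Nk) * T \<ge> (ak / K) * N"
proof -
  have "K * Nk * (Mr2 * E + (ak / Nk) * T) = K * Nk * Mr2 * E + K * ak * T"
    using assms(1) by (simp add: field_simps)
  also have "\<dots> \<ge> P + ak * T"
    using assms mult_right_mono[OF assms(2), of "ak * T"] by (simp add: mult.assoc mult_nonneg_nonneg)
  also have "P + ak * T = ak * Nk * N + P * (1 - ak / 2)" unfolding assms(8) by (simp add: algebra_simps)
  also have "\<dots> \<ge> ak * Nk * N" using assms by (simp add: mult_nonneg_nonneg)
  finally have "K * Nk * (ak / K * N) \<le> K * Nk * (Mr2 * E + (ak / Nk) * T)"
    using assms(1,2) by (simp add: field_simps)
  moreover have "0 < K * Nk" using assms(1,2) by simp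
  ultimately show ?thesis by (simp only: mult_le_cancel_left_pos)
qed

lemma a_j_bounds:
  assumes "L > 1" "k \<ge> 1" "0 < a"
  shows "3 * a / 4 \<le> a_j a L k" "a_j a L k \<le> a"
proof -
  define x where "x = 1 / real L ^ 2"
  define y where "y = 1 / real L ^ (2 * k)"
  have L2: "real L \<ge> 2" using assms by simp
  have px: "real L powr (-2) = x" unfolding x_def using assms
    by (simp add: powr_minus powr_realpow divide_inverse)
  have e1: "- 2 * real k = - (real (2 * k))" by simp
  have e2: "real L powr real (2*k) = real L ^ (2*k)" using assms by (intro powr_realpow) simp
  have py: "real L powr (- 2 * real k) = y" unfolding e1 powr_minus e2 y_def by (simp add: divide_inverse)
  have x4: "x \<le> 1/4"
  proof -
    have "4 \<le> real L ^ 2" using L2 power_mono[OF L2, of 2] by simp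
    then show ?thesis unfolding x_def by (simp add: divide_le_eq)
  qed
  have y0: "0 < y" unfolding y_def using assms by simp
  have yx: "y \<le> x"
  proof -
    have "real L ^ 2 \<le> real L ^ (2 * k)" using assms by (intro power_increasing) auto
    then show ?thesis unfolding x_def y_def using assms by (intro divide_left_mono) auto
  qed
  have aj: "a_j a L k = a * ((1 - x) / (1 - y))" unfolding a_j_def px py by simp
  have d: "0 < 1 - y" using yx x4 by linarith
  have r1: "(1 - x) / (1 - y) \<le> 1" using d yx by simp
  have r2: "3/4 \<le> (1 - x) / (1 - y)"
  proof -
    have "3/4 * (1 - y) \<le> 1 - x" unfolding right_diff_distrib using x4 y0 by linarith
    then show ?thesis using d by (simp add: le_divide_eq)
  qed
  show "3 * a / 4 \<le> a_j a L k" unfolding aj using mult_left_mono[OF r2, of a] assms by simp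
  show "a_j a L k \<le> a" unfolding aj using mult_left_mono[OF r1, of a] assms by simp
qed

lemma Re_ofreal_mult: "Re (complex_of_real r * z) = r * Re z" by simp

theorem coercive:
  fixes v :: "('n::finite \<Rightarrow> int) \<Rightarrow> complex" and w :: "('n \<Rightarrow> int) \<Rightarrow> real"
  assumes L: "L > 1" "1 \<le> k" "k \<le> m" and mu: "mu0 \<ge> 0" and a: "0 < a" "a \<le> 1"
    and W1: "\<And>x \<mu>. x \<in> Omega L m \<Longrightarrow> sh \<mu> x \<in> Omega L m \<Longrightarrow> \<bar>w x - w (sh \<mu> x)\<bar> \<le> \<alpha> / real L ^ k"
    and al: "0 \<le> \<alpha>" "\<alpha> \<le> 1"
    and W2: "\<And>c x z. c \<in> Omega_j L m k \<Longrightarrow> x \<in> Block L k c \<Longrightarrow> z \<in> Block L k c \<Longrightarrow> \<bar>w x - w z\<bar> \<le> \<beta>"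
    and be: "0 \<le> \<beta>" "\<beta> \<le> 1"
    and small: "2 * real CARD('n) * \<alpha>^2 + 2 * \<beta> \<le> a / (4 * 4 ^ CARD('n))"
  shows "Re (\<Sum>x\<in>Omega L m. cnj (of_real (exp (w x)) * v x) * Hop a mu0 L k m (\<lambda>z. of_real (exp (- w z)) * v z) x)
       \<ge> a / (2 * 4 ^ CARD('n)) * (\<Sum>x\<in>Omega L m. (cmod (v x))^2)"
proof -
  define S where "S = (Omega L m :: ('n \<Rightarrow> int) set)"
  define u where "u = (\<lambda>x. complex_of_real (exp (w x)) * v x)"
  define g where "g = (\<lambda>z. complex_of_real (exp (- w z)) * v z)"
  define Mr where "Mr = real L ^ k"
  define D where "D = CARD('n)"
  define Nk where "Nk = real L ^ (k * D)"
  define ak where "ak = a_j a L k"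
  define mk where "mk = mubar_j mu0 L k"
  define K where "K = (4::real) ^ D"
  define N where "N = (\<Sum>x\<in>S. (cmod (v x))^2)"
  define QQ where "QQ = (\<lambda>x. \<Sum>z\<in>Block L k (corner (int L ^ k) x). g z)"
  define E where "E = Eall S v"
  have L0: "L > 0" using L by simp
  have Mr1: "Mr \<ge> 1" unfolding Mr_def using L by simp
  have Nk0: "Nk > 0" unfolding Nk_def using L by simp
  have NkMr: "Nk = Mr ^ D" unfolding Nk_def Mr_def by (simp add: power_mult)
  have K1: "K \<ge> 1" unfolding K_def by simp
  have ak_lo: "3 * a / 4 \<le> ak" and ak_hi: "ak \<le> a" unfolding ak_def using a_j_bounds[OF L(1,2) a(1)] by auto
  have mk0: "mk \<ge> 0" unfolding mk_def mubar_j_def using mu by simp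
  have N0: "N \<ge> 0" unfolding N_def by (intro sum_nonneg) auto
  have HX: "cnj (u x) * Hop a mu0 L k m g x
      = complex_of_real (Mr^2) * (cnj (u x) * lap S g x) + complex_of_real mk * (cnj (u x) * g x)
        + complex_of_real ak * complex_of_real (1 / Nk) * (cnj (u x) * QQ x)" if "x \<in> S" for x
    using that unfolding S_def QQ_def Mr_def mk_def ak_def Nk_def D_def
    by (simp add: Hop_eq[OF L0 L(3)] algebra_simps power_mult)
  have "(\<Sum>x\<in>S. cnj (u x) * Hop a mu0 L k m g x)
      = (\<Sum>x\<in>S. complex_of_real (Mr^2) * (cnj (u x) * lap S g x) + complex_of_real mk * (cnj (u x) * g x)
        + complex_of_real ak * complex_of_real (1 / Nk) * (cnj (u x) * QQ x))"
    by (intro sum.cong refl HX)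
  also have "\<dots> = complex_of_real (Mr^2) * (\<Sum>x\<in>S. cnj (u x) * lap S g x)
        + complex_of_real mk * (\<Sum>x\<in>S. cnj (u x) * g x)
        + complex_of_real (ak * (1 / Nk)) * (\<Sum>x\<in>S. cnj (u x) * QQ x)"
    by (simp add: sum.distrib sum_distrib_left mult.assoc)
  finally have Re_eq: "Re (\<Sum>x\<in>S. cnj (u x) * Hop a mu0 L k m g x)
      = Mr^2 * Re (\<Sum>x\<in>S. cnj (u x) * lap S g x) + mk * Re (\<Sum>x\<in>S. cnj (u x) * g x)
        + (ak * (1 / Nk)) * Re (\<Sum>x\<in>S. cnj (u x) * QQ x)"
    by (simp only: Re_ofreal_mult plus_complex.sel)
  have R2: "Re (\<Sum>x\<in>S. cnj (u x) * g x) = N"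
  proof -
    have "cnj (u x) * g x = cnj (v x) * v x" for x
      unfolding u_def g_def by (simp add: exp_minus field_simps)
    then have "Re (\<Sum>x\<in>S. cnj (u x) * g x) = (\<Sum>x\<in>S. Re (cnj (v x) * v x))" by (simp only: Re_sum)
    then show ?thesis unfolding N_def by (simp only: re_cnj_self)
  qed
  have t1: "\<alpha> / Mr \<le> 1" using al Mr1 by (simp add: divide_le_eq)
  have R1: "Re (\<Sum>x\<in>S. cnj (u x) * lap S g x) \<ge> E - 2 * real D * (\<alpha> / Mr)^2 * N"
    unfolding u_def g_def E_def N_def D_def S_def
    by (rule lap_part) (use W1 t1 in \<open>auto simp: Mr_def\<close>)
  have R1': "Mr^2 * Re (\<Sum>x\<in>S. cnj (u x) * lap S g x) \<ge> Mr^2 * E - 2 * real D * \<alpha>^2 * N"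
  proof -
    have "Mr^2 * Re (\<Sum>x\<in>S. cnj (u x) * lap S g x) \<ge> Mr^2 * (E - 2 * real D * (\<alpha> / Mr)^2 * N)"
      by (rule mult_left_mono[OF R1]) simp
    also have "Mr^2 * (E - 2 * real D * (\<alpha> / Mr)^2 * N) = Mr^2 * E - 2 * real D * \<alpha>^2 * N"
      using Mr1 by (simp add: field_simps power2_eq_square)
    finally show ?thesis .
  qed
  define T where "T = (\<lambda>c. \<Sum>x\<in>Block L k c. \<Sum>z\<in>Block L k c. Re (cnj (v x) * v z))"
  define P where "P = (\<lambda>c. \<Sum>x\<in>Block L k c. \<Sum>z\<in>Block L k c. (cmod (v x - v z))^2)"
  define Nc where "Nc = (\<lambda>c. \<Sum>x\<in>Block L k c. (cmod (v x))^2)"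
  define Ec where "Ec = (\<lambda>c. Eall (Block L k c) v)"
  have R3: "Re (\<Sum>x\<in>S. cnj (u x) * QQ x) \<ge> (\<Sum>c\<in>Omega_j L m k. T c) - 2 * \<beta> * Nk * N"
    unfolding u_def QQ_def g_def S_def T_def N_def Nk_def D_def
    by (rule q_part[OF L0 L(3) W2 be])
  have percomb: "Mr^2 * Ec c + (ak / Nk) * T c \<ge> (ak / K) * Nc c" if c: "c \<in> Omega_j L m k" for c
  proof (rule comb)
    show "0 < Nk" by fact
    show "1 \<le> K" by fact
    show "0 \<le> ak" using ak_lo a by simp
    show "ak \<le> 1" using ak_hi a by simp
    show "0 \<le> P c" unfolding P_def by (intro sum_nonneg) auto
    have "P c \<le> 4 ^ CARD('n) * real_of_int (int L ^ k) ^ (CARD('n) + 2) * Eall (cube c (int L ^ k)) v"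
      unfolding P_def Block_box by (rule cube_poincare) (use L0 in simp)
    also have "\<dots> = K * Nk * Mr^2 * Ec c"
      unfolding K_def D_def Ec_def Block_box NkMr Mr_def by (simp add: power_add power2_eq_square)
    finally show "P c \<le> K * Nk * Mr^2 * Ec c" .
    show "0 \<le> T c" unfolding T_def by (rule block_T_nonneg)
    have "T c = real (card (Block L k c)) * Nc c - 1/2 * P c"
      unfolding T_def Nc_def P_def by (rule block_T_eq) (simp add: Block_box)
    then show "T c = Nk * Nc c - P c / 2" unfolding Nk_def D_def using card_Block[OF L0, of k c] by simp
  qed
  have sumcomb: "Mr^2 * (\<Sum>c\<in>Omega_j L m k. Ec c) + (ak / Nk) * (\<Sum>c\<in>Omega_j L m k. T c)
      \<ge> (ak / K) * N"
  proof -
    have "(\<Sum>c\<in>Omega_j L m k. (ak / K) * Nc c) \<le> (\<Sum>c\<in>Omega_j L m k. Mr^2 * Ec c + (ak / Nk) * T c)"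
      by (intro sum_mono percomb)
    moreover have "(\<Sum>c\<in>Omega_j L m k. (ak / K) * Nc c) = (ak / K) * N"
      unfolding N_def S_def Nc_def by (simp add: sum_distrib_left sum_Omega_blocks[OF L0 L(3)])
    moreover have "(\<Sum>c\<in>Omega_j L m k. Mr^2 * Ec c + (ak / Nk) * T c)
        = Mr^2 * (\<Sum>c\<in>Omega_j L m k. Ec c) + (ak / Nk) * (\<Sum>c\<in>Omega_j L m k. T c)"
      by (simp add: sum.distrib sum_distrib_left)
    ultimately show ?thesis by linarith
  qed
  have EE: "(\<Sum>c\<in>Omega_j L m k. Ec c) \<le> E"
    unfolding Ec_def E_def S_def by (rule Eall_blocks[OF L0 L(3)])
  have EE': "Mr^2 * (\<Sum>c\<in>Omega_j L m k. Ec c) \<le> Mr^2 * E" by (rule mult_left_mono[OF EE]) simp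
  have ak0: "0 \<le> ak / Nk" using ak_lo a Nk0 by simp
  have R3': "(ak * (1 / Nk)) * Re (\<Sum>x\<in>S. cnj (u x) * QQ x)
      \<ge> (ak / Nk) * (\<Sum>c\<in>Omega_j L m k. T c) - 2 * \<beta> * ak * N"
  proof -
    have "(ak / Nk) * Re (\<Sum>x\<in>S. cnj (u x) * QQ x) \<ge> (ak / Nk) * ((\<Sum>c\<in>Omega_j L m k. T c) - 2 * \<beta> * Nk * N)"
      by (rule mult_left_mono[OF R3 ak0])
    also have "(ak / Nk) * ((\<Sum>c\<in>Omega_j L m k. T c) - 2 * \<beta> * Nk * N)
        = (ak / Nk) * (\<Sum>c\<in>Omega_j L m k. T c) - 2 * \<beta> * ak * N"
      using Nk0 by (simp add: field_simps)
    finally show ?thesis by simp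
  qed
  have mkN: "mk * N \<ge> 0" using mk0 N0 by simp
  have bakN: "\<beta> * ak * N \<le> \<beta> * N"
  proof -
    have "ak * N \<le> 1 * N" using ak_hi a N0 by (intro mult_right_mono) auto
    then show ?thesis using be by (simp add: mult.assoc mult_left_mono)
  qed
  have akK: "(3 * a / 4) / K * N \<le> (ak / K) * N"
    using ak_lo K1 N0 by (intro mult_right_mono divide_right_mono) auto
  have sm: "(2 * real D * \<alpha>^2 + 2 * \<beta>) * N \<le> a / (4 * K) * N"
    using small N0 unfolding D_def K_def by (intro mult_right_mono) auto
  have fin: "Re (\<Sum>x\<in>S. cnj (u x) * Hop a mu0 L k m g x) \<ge> (3 * a / 4) / K * N - a / (4 * K) * N"
    using Re_eq R1' R2 R3' sumcomb EE' mkN bakN akK sm by (simp add: algebra_simps) linarith?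
  have "(3 * a / 4) / K * N - a / (4 * K) * N = a / (2 * K) * N"
    using K1 by (simp add: field_simps)
  with fin show ?thesis unfolding S_def u_def g_def N_def K_def D_def by simp
qed

lemma sum_fun_apply: "finite A \<Longrightarrow> (sum F A) x = (\<Sum>i\<in>A. F i x)"
  for F :: "'i \<Rightarrow> 'a \<Rightarrow> 'b::comm_monoid_add"
  by (induction A rule: finite_induct) (auto simp: plus_fun_def zero_fun_def)

lemma fin_dim_surj:
  fixes T :: "(('n::finite \<Rightarrow> int) \<Rightarrow> complex) \<Rightarrow> (('n \<Rightarrow> int) \<Rightarrow> complex)" and S :: "('n \<Rightarrow> int) set"
  assumes S: "finite S"
    and add: "\<And>f g. T (f + g) = T f + T g"
    and scale: "\<And>c f. T (\<lambda>x. c * f x) = (\<lambda>x. c * T f x)"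
    and maps: "\<And>f. f \<in> L2 S \<Longrightarrow> T f \<in> L2 S"
    and inj: "\<And>f. f \<in> L2 S \<Longrightarrow> T f = 0 \<Longrightarrow> f = 0"
    and h: "h \<in> L2 S"
  shows "\<exists>f\<in>L2 S. T f = h"
proof -
  define sc where "sc = (\<lambda>(c::complex) (f::('n \<Rightarrow> int) \<Rightarrow> complex) x. c * f x)"
  interpret FV: vector_space sc
    by unfold_locales (simp_all add: sc_def fun_eq_iff plus_fun_def distrib_left distrib_right)
  have lin: "Vector_Spaces.linear sc sc T"
    unfolding Vector_Spaces.linear_iff using FV.vector_space_axioms add scale by (auto simp: sc_def)
  interpret TH: Vector_Spaces.linear sc sc T by (rule lin)
  define d where "d = (\<lambda>y::'n \<Rightarrow> int. \<lambda>x. if x = y then (1::complex) else 0)"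
  define B where "B = d ` S"
  have d_inj: "inj d"
  proof (rule injI)
    fix a b assume "d a = d b"
    then have "d a a = d b a" by simp
    then show "a = b" by (simp add: d_def split: if_splits)
  qed
  have finB: "finite B" unfolding B_def using S by simp
  have cardB: "card B = card S" unfolding B_def using d_inj by (simp add: card_image inj_on_subset)
  have subL2: "FV.subspace (L2 S)"
    by (rule FV.subspaceI) (auto simp: L2_def sc_def zero_fun_def plus_fun_def)
  have BL2: "B \<subseteq> L2 S" unfolding B_def L2_def d_def by auto
  have spanB: "FV.span B \<subseteq> L2 S" by (rule FV.span_minimal[OF BL2 subL2])
  have L2span: "L2 S \<subseteq> FV.span B"
  proof
    fix f assume f: "f \<in> L2 S"
    have "f = (\<Sum>y\<in>S. sc (f y) (d y))"
    proof
      fix x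
      have "(\<Sum>y\<in>S. sc (f y) (d y)) x = (\<Sum>y\<in>S. f y * d y x)" by (simp add: sum_fun_apply[OF S] sc_def)
      also have "\<dots> = (if x \<in> S then f x else 0)" using S by (simp add: d_def if_distrib cong: if_cong)
      also have "\<dots> = f x" using f by (auto simp: L2_def)
      finally show "f x = (\<Sum>y\<in>S. sc (f y) (d y)) x" by simp
    qed
    also have "\<dots> \<in> FV.span B"
      by (intro FV.span_sum FV.span_scale FV.span_base) (auto simp: B_def)
    finally show "f \<in> FV.span B" .
  qed
  have indB: "FV.independent B"
    unfolding FV.independent_explicit_module
  proof (intro allI impI)
    fix t u v assume t: "finite t" "t \<subseteq> B" and sum0: "(\<Sum>v\<in>t. sc (u v) v) = 0" and v: "v \<in> t"
    then obtain y where y: "y \<in> S" "v = d y" unfolding B_def by auto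
    have "0 = (\<Sum>v\<in>t. sc (u v) v) y" using sum0 by (simp add: zero_fun_def)
    also have "\<dots> = (\<Sum>v'\<in>t. u v' * v' y)" using t by (simp add: sum_fun_apply sc_def)
    also have "\<dots> = (\<Sum>v'\<in>t. if v' = v then u v else 0)"
    proof (rule sum.cong[OF refl])
      fix v' assume "v' \<in> t"
      then obtain y' where y': "v' = d y'" using t unfolding B_def by auto
      have e1: "(v' = v) = (y' = y)" unfolding y' y(2) using d_inj by (simp add: inj_eq)
      have e2: "v' y = (if y' = y then 1 else 0)" unfolding y' d_def by auto
      have "v' y = (if v' = v then 1 else 0)" using e1 e2 by simp
      then show "u v' * v' y = (if v' = v then u v else 0)" by simp
    qed
    also have "\<dots> = u v" using t v by simp
    finally show "u v = 0" by simp
  qed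
  have injT: "inj_on T (FV.span B)"
  proof (rule inj_onI)
    fix f g assume f: "f \<in> FV.span B" and g: "g \<in> FV.span B" and e: "T f = T g"
    have fg: "f \<in> L2 S" "g \<in> L2 S" using spanB f g by auto
    then have "f - g \<in> L2 S" unfolding L2_def by simp
    moreover have "T (f - g) = 0" using e by (simp add: TH.diff)
    ultimately have "f - g = 0" by (rule inj)
    then show "f = g" by simp
  qed
  have indTB: "FV.independent (T ` B)"
    by (rule TH.independent_injective_image[OF indB injT])
  have TBL2: "T ` B \<subseteq> L2 S" using BL2 maps by auto
  have cardTB: "card (T ` B) = card B"
    by (rule card_image[OF inj_on_subset[OF injT FV.span_superset]])
  have "L2 S \<subseteq> FV.span (T ` B)"
  proof
    fix h' assume h': "h' \<in> L2 S"
    show "h' \<in> FV.span (T ` B)"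
    proof (rule ccontr)
      assume nh: "h' \<notin> FV.span (T ` B)"
      have ind2: "FV.independent (insert h' (T ` B))" by (rule FV.independent_insertI[OF nh indTB])
      have sub2: "insert h' (T ` B) \<subseteq> FV.span B" using h' TBL2 L2span by auto
      have "card (insert h' (T ` B)) \<le> card B"
        using FV.independent_span_bound[OF finB ind2 sub2] by simp
      moreover have "h' \<notin> T ` B" using nh FV.span_superset by blast
      ultimately show False using finB cardTB by simp
    qed
  qed
  also have "FV.span (T ` B) = T ` FV.span B" by (rule TH.span_image)
  also have "\<dots> \<subseteq> T ` L2 S" using spanB by auto
  finally show ?thesis using h by auto
qed

lemma lap_add: "lap S (\<lambda>y. f y + g y) x = lap S f x + lap S g x"
  unfolding lap_def sum.distrib[symmetric] by (rule sum.cong) (auto simp: algebra_simps)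

lemma lap_scale: "lap S (\<lambda>y. c * f y) x = c * lap S f x"
  unfolding lap_def sum_distrib_left by (rule sum.cong) (auto simp: algebra_simps)

lemma Hop_add:
  assumes "L > 0" "k \<le> m"
  shows "Hop a mu0 L k m (f + g) = Hop a mu0 L k m f + Hop a mu0 L k m (g::('n::finite \<Rightarrow> int) \<Rightarrow> complex)"
proof
  fix x
  show "Hop a mu0 L k m (f + g) x = (Hop a mu0 L k m f + Hop a mu0 L k m g) x"
  proof (cases "x \<in> Omega L m")
    case True
    have fg: "f + g = (\<lambda>y. f y + g y)" by (simp add: plus_fun_def)
    show ?thesis using True unfolding fg
      by (simp add: Hop_eq[OF assms] lap_add sum.distrib algebra_simps plus_fun_def)
  next
    case False then show ?thesis by (simp add: Hop_def plus_fun_def)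
  qed
qed

lemma Hop_scale:
  assumes "L > 0" "k \<le> m"
  shows "Hop a mu0 L k m (\<lambda>x. c * f x) = (\<lambda>x. c * Hop a mu0 L k m (f::('n::finite \<Rightarrow> int) \<Rightarrow> complex) x)"
proof
  fix x
  show "Hop a mu0 L k m (\<lambda>x. c * f x) x = c * Hop a mu0 L k m f x"
  proof (cases "x \<in> Omega L m")
    case True
    show ?thesis using True
      by (simp add: Hop_eq[OF assms] lap_scale sum_distrib_left[symmetric] algebra_simps)
  next
    case False then show ?thesis by (simp add: Hop_def)
  qed
qed

lemma Hop_maps: "Hop a mu0 L k m f \<in> L2 (Omega L m)"
  unfolding L2_def Hop_def by simp

lemma Hop_inj:
  assumes L: "L > 1" "1 \<le> k" "k \<le> m" and mu: "mu0 \<ge> 0" and a: "0 < a" "a \<le> 1"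
    and f: "f \<in> L2 (Omega L m)" and h: "Hop a mu0 L k m f = 0"
  shows "f = (0::('n::finite \<Rightarrow> int) \<Rightarrow> complex)"
proof -
  have "Re (\<Sum>x\<in>Omega L m. cnj (of_real (exp ((\<lambda>_. 0) x)) * f x) * Hop a mu0 L k m (\<lambda>z. of_real (exp (- (\<lambda>_. 0) z)) * f z) x)
       \<ge> a / (2 * 4 ^ CARD('n)) * (\<Sum>x\<in>Omega L m. (cmod (f x))^2)"
    by (rule coercive[OF L mu a, where \<alpha> = 0 and \<beta> = 0]) (use a in auto)
  then have "0 \<ge> a / (2 * 4 ^ CARD('n)) * (\<Sum>x\<in>Omega L m. (cmod (f x))^2)"
    using h by (simp add: zero_fun_def)
  moreover have "a / (2 * 4 ^ CARD('n)) > 0" using a by simp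
  ultimately have "(\<Sum>x\<in>Omega L m. (cmod (f x))^2) \<le> 0"
    by (metis mult_le_0_iff not_less)
  then have "(\<Sum>x\<in>Omega L m. (cmod (f x))^2) = 0" by (meson antisym sum_nonneg zero_le_power2)
  then have "\<forall>x\<in>Omega L m. (cmod (f x))^2 = 0" by (subst (asm) sum_nonneg_eq_0_iff) auto
  then show ?thesis using f by (auto simp: L2_def fun_eq_iff)
qed

lemma Gk_props:
  assumes L: "L > 1" "1 \<le> k" "k \<le> m" and mu: "mu0 \<ge> 0" and a: "0 < a" "a \<le> 1"
    and f: "f \<in> L2 (Omega L m)"
  shows "Gk a mu0 L k m f \<in> L2 (Omega L m) \<and> Hop a mu0 L k m (Gk a mu0 L k m f) = (f::('n::finite \<Rightarrow> int) \<Rightarrow> complex)"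
proof -
  have L0: "L > 0" using L by simp
  have ex: "\<exists>g\<in>L2 (Omega L m). Hop a mu0 L k m g = f"
    by (rule fin_dim_surj[OF finite_Omega Hop_add[OF L0 L(3)] Hop_scale[OF L0 L(3)] Hop_maps
          Hop_inj[OF L mu a] f])
  have uq: "g1 = g2" if "g1 \<in> L2 (Omega L m)" "Hop a mu0 L k m g1 = f"
      "g2 \<in> L2 (Omega L m)" "Hop a mu0 L k m g2 = f" for g1 g2
  proof -
    have e: "g1 - g2 = g1 + (\<lambda>x. (-1) * g2 x)" by (simp add: fun_eq_iff)
    have "Hop a mu0 L k m (g1 - g2) = 0"
      unfolding e Hop_add[OF L0 L(3)] Hop_scale[OF L0 L(3)] using that by (simp add: fun_eq_iff)
    moreover have "g1 - g2 \<in> L2 (Omega L m)" using that by (simp add: L2_def)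
    ultimately have "g1 - g2 = 0" using Hop_inj[OF L mu a] by blast
    then show ?thesis by simp
  qed
  have "\<exists>!g. g \<in> L2 (Omega L m) \<and> Hop a mu0 L k m g = f" using ex uq by blast
  then show ?thesis unfolding Gk_def by (rule theI')
qed

definition rho :: "real \<Rightarrow> ('n::finite \<Rightarrow> int) \<Rightarrow> ('n \<Rightarrow> int) \<Rightarrow> real" where
  "rho Mr y' x = (\<Sum>\<mu>\<in>UNIV. \<bar>real_of_int (x \<mu> - y' \<mu>)\<bar>) / Mr"

lemma rho_diff_le:
  assumes "Mr > 0"
  shows "\<bar>rho Mr y' x - rho Mr y' z\<bar> \<le> (\<Sum>\<mu>\<in>UNIV. \<bar>real_of_int (x \<mu> - z \<mu>)\<bar>) / Mr"
proof -
  have "\<bar>(\<Sum>\<mu>\<in>UNIV. \<bar>real_of_int (x \<mu> - y' \<mu>)\<bar>) - (\<Sum>\<mu>\<in>UNIV. \<bar>real_of_int (z \<mu> - y' \<mu>)\<bar>)\<bar>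
      = \<bar>\<Sum>\<mu>\<in>UNIV. \<bar>real_of_int (x \<mu> - y' \<mu>)\<bar> - \<bar>real_of_int (z \<mu> - y' \<mu>)\<bar>\<bar>"
    by (simp add: sum_subtractf)
  also have "\<dots> \<le> (\<Sum>\<mu>\<in>UNIV. \<bar>\<bar>real_of_int (x \<mu> - y' \<mu>)\<bar> - \<bar>real_of_int (z \<mu> - y' \<mu>)\<bar>\<bar>)"
    by (rule sum_abs)
  also have "\<dots> \<le> (\<Sum>\<mu>\<in>UNIV. \<bar>real_of_int (x \<mu> - z \<mu>)\<bar>)"
  proof (rule sum_mono)
    fix \<mu>
    have "\<bar>\<bar>real_of_int (x \<mu> - y' \<mu>)\<bar> - \<bar>real_of_int (z \<mu> - y' \<mu>)\<bar>\<bar>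
        \<le> \<bar>real_of_int (x \<mu> - y' \<mu>) - real_of_int (z \<mu> - y' \<mu>)\<bar>" by (rule abs_triangle_ineq3)
    then show "\<bar>\<bar>real_of_int (x \<mu> - y' \<mu>)\<bar> - \<bar>real_of_int (z \<mu> - y' \<mu>)\<bar>\<bar> \<le> \<bar>real_of_int (x \<mu> - z \<mu>)\<bar>"
      by simp
  qed
  finally show ?thesis using assms unfolding rho_def
    by (simp add: diff_divide_distrib[symmetric] abs_div divide_right_mono)
qed

lemma rho_sh:
  assumes "Mr > 0"
  shows "\<bar>rho Mr y' x - rho Mr y' (sh \<mu> x)\<bar> \<le> 1 / Mr"
proof -
  have "\<bar>rho Mr y' x - rho Mr y' (sh \<mu> x)\<bar> \<le> (\<Sum>\<nu>\<in>UNIV. \<bar>real_of_int (x \<nu> - sh \<mu> x \<nu>)\<bar>) / Mr"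
    by (rule rho_diff_le[OF assms])
  also have "(\<Sum>\<nu>\<in>UNIV. \<bar>real_of_int (x \<nu> - sh \<mu> x \<nu>)\<bar>) = (\<Sum>\<nu>\<in>UNIV. if \<nu> = \<mu> then 1 else 0)"
    by (rule sum.cong) (auto simp: sh_def)
  also have "\<dots> = 1" by simp
  finally show ?thesis .
qed

lemma rho_cube:
  assumes "M > 0" "x \<in> cube c M" "z \<in> cube c M"
  shows "\<bar>rho (real_of_int M) y' x - rho (real_of_int M) y' (z::'n::finite \<Rightarrow> int)\<bar> \<le> real CARD('n)"
proof -
  have "\<bar>rho (real_of_int M) y' x - rho (real_of_int M) y' z\<bar> \<le> (\<Sum>\<nu>\<in>UNIV. \<bar>real_of_int (x \<nu> - z \<nu>)\<bar>) / real_of_int M"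
    by (rule rho_diff_le) (use assms in simp)
  also have "\<dots> \<le> (\<Sum>\<nu>\<in>(UNIV::'n set). real_of_int M) / real_of_int M"
  proof (intro divide_right_mono sum_mono)
    fix \<nu>
    have "c \<nu> \<le> x \<nu>" "x \<nu> < c \<nu> + M" "c \<nu> \<le> z \<nu>" "z \<nu> < c \<nu> + M"
      using assms unfolding cube_def by auto
    then have "\<bar>x \<nu> - z \<nu>\<bar> \<le> M" by linarith
    then show "\<bar>real_of_int (x \<nu> - z \<nu>)\<bar> \<le> real_of_int M" by (metis of_int_abs of_int_le_iff)
  qed (use assms in simp)
  also have "\<dots> = real CARD('n)" using assms by simp
  finally show ?thesis .
qed

lemma rho_self: "rho Mr y' y' = 0" unfolding rho_def by simp

lemma rho_latdist:
  assumes "Mr > 0"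
  shows "latdist (1 / Mr) y y' \<le> rho Mr y' y"
proof -
  have "latdist (1 / Mr) y y' = L2_set (\<lambda>\<mu>. 1 / Mr * real_of_int (y \<mu> - y' \<mu>)) UNIV"
    unfolding latdist_def L2_set_def ..
  also have "\<dots> \<le> (\<Sum>\<mu>\<in>UNIV. \<bar>1 / Mr * real_of_int (y \<mu> - y' \<mu>)\<bar>)" by (rule L2_set_le_sum_abs)
  also have "\<dots> = rho Mr y' y" unfolding rho_def using assms
    by (simp add: abs_mult sum_distrib_left[symmetric] divide_inverse mult.commute)
  finally show ?thesis .
qed

lemma norm_L2_eq:
  assumes "eta > 0"
  shows "norm_L2 eta S f = sqrt (eta ^ CARD('n)) * L2_set (\<lambda>x. cmod (f x)) (S::('n::finite \<Rightarrow> int) set)"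
proof -
  have "Re (inner_L2 eta S f f) = eta ^ CARD('n) * (\<Sum>x\<in>S. (cmod (f x))^2)"
    unfolding inner_L2_def by (simp only: Re_ofreal_mult Re_sum re_cnj_self)
  then show ?thesis unfolding norm_L2_def L2_set_def by (simp add: real_sqrt_mult)
qed

lemma cmod_inner_L2:
  assumes "eta > 0"
  shows "cmod (inner_L2 eta S f g) = eta ^ CARD('n) * cmod (\<Sum>x\<in>(S::('n::finite \<Rightarrow> int) set). cnj (f x) * g x)"
  unfolding inner_L2_def using assms by (simp add: norm_mult norm_power del: of_real_power)

lemma CS_cmod:
  "(\<Sum>x\<in>S. cmod (p x) * cmod (q x)) \<le> L2_set (\<lambda>x. cmod (p x)) S * L2_set (\<lambda>x. cmod (q x)) S"
  using L2_set_mult_ineq[of "\<lambda>x. cmod (p x)" "\<lambda>x. cmod (q x)" S] by simp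

lemma L2_set_sq: "finite S \<Longrightarrow> (L2_set (\<lambda>x. cmod (p x)) S)^2 = (\<Sum>x\<in>S. (cmod (p x))^2)"
  unfolding L2_set_def by (simp add: sum_nonneg)

theorem mainTheorem3:
  fixes a :: real
  assumes "0 < a" and "a \<le> 1"
  shows "\<exists>c>0. \<exists>c1>0. \<forall>(L::nat) (k::nat) (m::nat) (mu0::real) (y::'n::finite \<Rightarrow> int) y'
            (f::('n \<Rightarrow> int) \<Rightarrow> complex) f'.
     odd L \<and> L > 1 \<and> k \<ge> 1 \<and> m \<ge> k \<and> mu0 \<ge> 0 \<and>
     y \<in> Omega_j L m k \<and> y' \<in> Omega_j L m k \<and>
     f \<in> L2 (Omega L m) \<and> f' \<in> L2 (Omega L m) \<and>
     {x. f x \<noteq> 0} \<subseteq> Block L k y \<and> {x. f' x \<noteq> 0} \<subseteq> Block L k y'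
     \<longrightarrow> cmod (inner_L2 (eta_of L k) (Omega L m) f (Gk a mu0 L k m f'))
         \<le> c * exp (- c1 * latdist (eta_of L k) y y')
             * norm_L2 (eta_of L k) (Omega L m) f * norm_L2 (eta_of L k) (Omega L m) f'"
proof -
  define d where "d = real CARD('n)"
  define K where "K = (4::real) ^ CARD('n)"
  define \<gamma> where "\<gamma> = a / (2 * K)"
  define \<alpha> where "\<alpha> = a / (16 * d * K)"
  define c where "c = exp (2 * \<alpha> * d) / \<gamma>"
  have d1: "d \<ge> 1" unfolding d_def by simp
  have K1: "K \<ge> 1" unfolding K_def by simp
  have g0: "\<gamma> > 0" unfolding \<gamma>_def using assms K1 by simp
  have a0: "\<alpha> > 0" unfolding \<alpha>_def using assms K1 d1 by simp
  have a1: "\<alpha> \<le> 1"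
  proof -
    have "a \<le> 16 * d * K" using assms d1 K1 by (smt (verit) mult_le_cancel_right1 mult_mono)
    then show ?thesis unfolding \<alpha>_def using d1 K1 by simp
  qed
  have c0: "c > 0" unfolding c_def using g0 by simp
  show ?thesis
  proof (rule exI[of _ c], rule conjI[OF c0], rule exI[of _ \<alpha>], rule conjI[OF a0], intro allI impI)
    fix L k m :: nat and mu0 :: real and y y' :: "'n \<Rightarrow> int" and f f' :: "('n \<Rightarrow> int) \<Rightarrow> complex"
    assume H: "odd L \<and> L > 1 \<and> k \<ge> 1 \<and> m \<ge> k \<and> mu0 \<ge> 0 \<and>
     y \<in> Omega_j L m k \<and> y' \<in> Omega_j L m k \<and>
     f \<in> L2 (Omega L m) \<and> f' \<in> L2 (Omega L m) \<and>
     {x. f x \<noteq> 0} \<subseteq> Block L k y \<and> {x. f' x \<noteq> 0} \<subseteq> Block L k y'"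
    then have L: "L > 1" "1 \<le> k" "k \<le> m" and mu: "mu0 \<ge> 0"
      and yy: "y \<in> Omega_j L m k" "y' \<in> Omega_j L m k"
      and ff: "f \<in> L2 (Omega L m)" "f' \<in> L2 (Omega L m)"
      and supp: "{x. f x \<noteq> 0} \<subseteq> Block L k y" "{x. f' x \<noteq> 0} \<subseteq> Block L k y'" by auto
    have L0: "L > 0" using L by simp
    define S where "S = (Omega L m :: ('n \<Rightarrow> int) set)"
    define M where "M = int L ^ k"
    define Mr where "Mr = real L ^ k"
    have M0: "M > 0" unfolding M_def using L0 by simp
    have Mr0: "Mr > 0" unfolding Mr_def using L0 by simp
    have MMr: "real_of_int M = Mr" unfolding M_def Mr_def by simp
    have eta: "eta_of L k = 1 / Mr" unfolding Mr_def by (rule eta_of_eq[OF L0])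
    define g where "g = Gk a mu0 L k m f'"
    have gp: "g \<in> L2 S" "Hop a mu0 L k m g = f'"
      using Gk_props[OF L mu assms ff(2)] unfolding g_def S_def by auto
    define w where "w = (\<lambda>x. \<alpha> * rho Mr y' x)"
    define v where "v = (\<lambda>x. complex_of_real (exp (w x)) * g x)"
    have gv: "(\<lambda>z. complex_of_real (exp (- w z)) * v z) = g"
      unfolding v_def by (simp add: fun_eq_iff exp_minus field_simps)
    define R where "R = latdist (eta_of L k) y y'"
    have W1: "\<bar>w x - w (sh \<mu> x)\<bar> \<le> \<alpha> / real L ^ k" for x \<mu>
    proof -
      have "\<bar>w x - w (sh \<mu> x)\<bar> = \<alpha> * \<bar>rho Mr y' x - rho Mr y' (sh \<mu> x)\<bar>"
        unfolding w_def using a0 by (simp add: abs_mult right_diff_distrib[symmetric])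
      also have "\<dots> \<le> \<alpha> * (1 / Mr)" by (rule mult_left_mono[OF rho_sh[OF Mr0]]) (use a0 in simp)
      finally show ?thesis unfolding Mr_def by simp
    qed
    have wcube: "\<bar>w x - w z\<bar> \<le> d * \<alpha>" if "x \<in> cube c0 M" "z \<in> cube c0 M" for x z c0
    proof -
      have "\<bar>w x - w z\<bar> = \<alpha> * \<bar>rho Mr y' x - rho Mr y' z\<bar>"
        unfolding w_def using a0 by (simp add: abs_mult right_diff_distrib[symmetric])
      also have "\<dots> \<le> \<alpha> * d"
        using mult_left_mono[OF rho_cube[OF M0 that, of y'], of \<alpha>] a0 unfolding MMr d_def by simp
      finally show ?thesis by (simp add: mult.commute)
    qed
    have W2: "\<bar>w x - w z\<bar> \<le> d * \<alpha>" if "c0 \<in> Omega_j L m k" "x \<in> Block L k c0" "z \<in> Block L k c0" for c0 x z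
      using wcube that unfolding Block_box M_def by blast
    have small: "2 * real CARD('n) * \<alpha>^2 + 2 * (d * \<alpha>) \<le> a / (4 * 4 ^ CARD('n))"
    proof -
      have "\<alpha>^2 \<le> \<alpha>" using a0 a1 by (simp add: power2_eq_square mult_left_le_one_le)
      then have "2 * d * \<alpha>^2 + 2 * (d * \<alpha>) \<le> 4 * d * \<alpha>" using d1 by (simp add: mult_left_mono)
      also have "4 * d * \<alpha> = a / (4 * K)" unfolding \<alpha>_def using d1 K1 by (simp add: field_simps)
      finally show ?thesis unfolding d_def K_def .
    qed
    have dal1: "d * \<alpha> \<le> 1"
    proof -
      have "d * \<alpha> = a / (16 * K)" unfolding \<alpha>_def using d1 K1 by (simp add: field_simps)
      also have "\<dots> \<le> 1" using assms K1 by (simp add: divide_le_eq) 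
      finally show ?thesis .
    qed
    have coer: "Re (\<Sum>x\<in>S. cnj (of_real (exp (w x)) * v x) * Hop a mu0 L k m g x)
       \<ge> a / (2 * 4 ^ CARD('n)) * (\<Sum>x\<in>S. (cmod (v x))^2)"
    proof -
      have "Re (\<Sum>x\<in>Omega L m. cnj (of_real (exp (w x)) * v x) * Hop a mu0 L k m (\<lambda>z. complex_of_real (exp (- w z)) * v z) x)
       \<ge> a / (2 * 4 ^ CARD('n)) * (\<Sum>x\<in>Omega L m. (cmod (v x))^2)"
      proof (rule coercive[where \<alpha> = \<alpha> and \<beta> = "d * \<alpha>"])
        show "\<bar>w x - w z\<bar> \<le> d * \<alpha>" if "c0 \<in> Omega_j L m k" "x \<in> Block L k c0" "z \<in> Block L k c0" for c0 x z
          by (rule W2[OF that])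
      qed (use L mu assms W1 a0 a1 dal1 small d1 in auto)
      then show ?thesis unfolding gv S_def .
    qed
    have y'cube: "y' \<in> cube y' M" unfolding cube_def using M0 by simp
    have ycube: "y \<in> cube y M" unfolding cube_def using M0 by simp
    have w_up: "w x \<le> \<alpha> * d" if "f' x \<noteq> 0" for x
    proof -
      have "x \<in> cube y' M" using supp(2) that unfolding Block_box M_def by auto
      then have "\<bar>w x - w y'\<bar> \<le> d * \<alpha>" using wcube y'cube by blast
      moreover have "w y' = 0" unfolding w_def by (simp add: rho_self)
      ultimately show ?thesis by (simp add: mult.commute)
    qed
    have w_lo: "w x \<ge> \<alpha> * (R - d)" if "f x \<noteq> 0" for x
    proof -
      have "x \<in> cube y M" using supp(1) that unfolding Block_box M_def by auto
      then have "\<bar>w x - w y\<bar> \<le> d * \<alpha>" using wcube ycube by blast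
      moreover have "\<alpha> * R \<le> w y" unfolding w_def R_def eta
        using rho_latdist[OF Mr0, of y y'] a0 by (simp add: mult_left_mono)
      ultimately show ?thesis by (simp add: algebra_simps)
    qed
    define nv where "nv = L2_set (\<lambda>x. cmod (v x)) S"
    define nf where "nf = L2_set (\<lambda>x. cmod (f x)) S"
    define nf' where "nf' = L2_set (\<lambda>x. cmod (f' x)) S"
    have nv0: "nv \<ge> 0" "nf \<ge> 0" "nf' \<ge> 0" unfolding nv_def nf_def nf'_def by (auto intro: L2_set_nonneg)
    have up: "Re (\<Sum>x\<in>S. cnj (of_real (exp (w x)) * v x) * Hop a mu0 L k m g x) \<le> exp (\<alpha> * d) * (nv * nf')"
    proof -
      have "Re (\<Sum>x\<in>S. cnj (of_real (exp (w x)) * v x) * Hop a mu0 L k m g x)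
          \<le> cmod (\<Sum>x\<in>S. cnj (of_real (exp (w x)) * v x) * f' x)" unfolding gp(2) by (rule complex_Re_le_cmod)
      also have "\<dots> \<le> (\<Sum>x\<in>S. cmod (cnj (of_real (exp (w x)) * v x) * f' x))" by (rule norm_sum)
      also have "\<dots> \<le> (\<Sum>x\<in>S. exp (\<alpha> * d) * (cmod (v x) * cmod (f' x)))"
      proof (rule sum_mono)
        fix x
        show "cmod (cnj (of_real (exp (w x)) * v x) * f' x) \<le> exp (\<alpha> * d) * (cmod (v x) * cmod (f' x))"
        proof (cases "f' x = 0")
          case True then show ?thesis by simp
        next
          case False
          have "cmod (cnj (of_real (exp (w x)) * v x) * f' x) = exp (w x) * (cmod (v x) * cmod (f' x))"
            by (simp add: norm_mult)
          also have "\<dots> \<le> exp (\<alpha> * d) * (cmod (v x) * cmod (f' x))"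
            using w_up[OF False] by (intro mult_right_mono) auto
          finally show ?thesis .
        qed
      qed
      also have "\<dots> = exp (\<alpha> * d) * (\<Sum>x\<in>S. cmod (v x) * cmod (f' x))" by (simp add: sum_distrib_left)
      also have "\<dots> \<le> exp (\<alpha> * d) * (nv * nf')" unfolding nv_def nf'_def
        by (intro mult_left_mono CS_cmod) auto
      finally show ?thesis .
    qed
    have Nv: "(\<Sum>x\<in>S. (cmod (v x))^2) = nv^2" unfolding nv_def S_def by (simp add: L2_set_sq)
    have nvb: "\<gamma> * nv \<le> exp (\<alpha> * d) * nf'"
    proof (cases "nv = 0")
      case True then show ?thesis using nv0 by simp
    next
      case False
      then have nvp: "nv > 0" using nv0 by simp
      have "\<gamma> * nv * nv \<le> exp (\<alpha> * d) * nf' * nv"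
        using coer up unfolding Nv \<gamma>_def K_def by (simp add: power2_eq_square algebra_simps)
      then show ?thesis using nvp by (simp add: mult_le_cancel_right)
    qed
    have ip: "cmod (\<Sum>x\<in>S. cnj (f x) * g x) \<le> exp (- \<alpha> * (R - d)) * (nf * nv)"
    proof -
      have "cmod (\<Sum>x\<in>S. cnj (f x) * g x) \<le> (\<Sum>x\<in>S. cmod (cnj (f x) * g x))" by (rule norm_sum)
      also have "\<dots> \<le> (\<Sum>x\<in>S. exp (- \<alpha> * (R - d)) * (cmod (f x) * cmod (v x)))"
      proof (rule sum_mono)
        fix x
        show "cmod (cnj (f x) * g x) \<le> exp (- \<alpha> * (R - d)) * (cmod (f x) * cmod (v x))"
        proof (cases "f x = 0")
          case True then show ?thesis by simp
        next
          case False
          have gx: "g x = complex_of_real (exp (- w x)) * v x" using gv by (metis)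
          have "cmod (cnj (f x) * g x) = exp (- w x) * (cmod (f x) * cmod (v x))"
            unfolding gx by (simp add: norm_mult)
          also have "\<dots> \<le> exp (- \<alpha> * (R - d)) * (cmod (f x) * cmod (v x))"
            using w_lo[OF False] by (intro mult_right_mono) auto
          finally show ?thesis .
        qed
      qed
      also have "\<dots> = exp (- \<alpha> * (R - d)) * (\<Sum>x\<in>S. cmod (f x) * cmod (v x))" by (simp add: sum_distrib_left)
      also have "\<dots> \<le> exp (- \<alpha> * (R - d)) * (nf * nv)" unfolding nf_def nv_def
        by (intro mult_left_mono CS_cmod) auto
      finally show ?thesis .
    qed
    have key: "cmod (\<Sum>x\<in>S. cnj (f x) * g x) \<le> c * exp (- \<alpha> * R) * (nf * nf')"
    proof -
      have "nf * nv \<le> nf * (exp (\<alpha> * d) * nf' / \<gamma>)"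
      proof -
        have "nv \<le> exp (\<alpha> * d) * nf' / \<gamma>" using nvb g0 by (simp add: field_simps)
        then show ?thesis by (rule mult_left_mono) (use nv0 in simp)
      qed
      then have "exp (- \<alpha> * (R - d)) * (nf * nv) \<le> exp (- \<alpha> * (R - d)) * (nf * (exp (\<alpha> * d) * nf' / \<gamma>))"
        by (rule mult_left_mono) auto
      also have "\<dots> = c * exp (- \<alpha> * R) * (nf * nf')"
        unfolding c_def by (simp add: field_simps exp_add[symmetric] exp_diff)
      finally show ?thesis using ip by linarith
    qed
    have e0: "eta_of L k > 0" unfolding eta using Mr0 by simp
    show "cmod (inner_L2 (eta_of L k) (Omega L m) f (Gk a mu0 L k m f'))
         \<le> c * exp (- \<alpha> * latdist (eta_of L k) y y')
             * norm_L2 (eta_of L k) (Omega L m) f * norm_L2 (eta_of L k) (Omega L m) f'"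
    proof -
      have s: "sqrt (eta_of L k ^ CARD('n)) * sqrt (eta_of L k ^ CARD('n)) = eta_of L k ^ CARD('n)"
        using e0 by simp
      have "cmod (inner_L2 (eta_of L k) (Omega L m) f (Gk a mu0 L k m f'))
          = eta_of L k ^ CARD('n) * cmod (\<Sum>x\<in>S. cnj (f x) * g x)"
        unfolding S_def g_def by (rule cmod_inner_L2[OF e0])
      also have "\<dots> \<le> eta_of L k ^ CARD('n) * (c * exp (- \<alpha> * R) * (nf * nf'))"
        by (rule mult_left_mono[OF key]) (use e0 in simp)
      also have "\<dots> = c * exp (- \<alpha> * latdist (eta_of L k) y y')
             * norm_L2 (eta_of L k) (Omega L m) f * norm_L2 (eta_of L k) (Omega L m) f'"
        unfolding norm_L2_eq[OF e0] R_def nf_def nf'_def S_def using s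
        by (simp add: algebra_simps)
      finally show ?thesis .
    qed
  qed
qed

end
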